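(* Consider the Lasso problem of minimizing $\varphi(x):=\frac12\|Ax-b\|_2^2+\mu\|x\|_1$ over $x\in\mathbb{R}^n$, where $A\in\mathbb{R}^{m\times n}$, $b\in\mathbb{R}^m$, $\mu>0$, and suppose that $A^*A$ is positive-definite. Write $\varphi(x)=\frac12\langle\bar Ax,x\rangle+\langle\bar b,x\rangle+\bar\alpha+g(x)$ with $\bar A:=A^*A$, $\bar b:=-A^*b$, $\bar\alpha:=\frac12\|b\|^2$, $g(x):=\mu\|x\|_1$. Then: (i) the Generalized Damped Newton Algorithm for Quadratic Composite Optimization applied with data $(\bar A,\bar b,g)$ is well-defined, and its sequence of iterates $\{y^k\}$ globally converges at least Q-superlinearly to some $\bar y$; (ii) $\bar x:=Q\bar y+c$ is the unique solution of the Lasso problem and is a tilt-stable local minimizer of $\varphi$.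
   Context: Moreau envelope and proximal map of $g$ with $\gamma>0$: $e_\gamma g(x):=\inf_y\{g(y)+\frac1{2\gamma}\|y-x\|^2\}$, $\operatorname{Prox}_{\gamma g}(x):=\operatorname{argmin}_y\{g(y)+\frac1{2\gamma}\|y-x\|^2\}$. Generalized Damped Newton Algorithm for Quadratic Composite Optimization with data $(\bar A,\bar b,g)$: parameters $\sigma\in(0,\tfrac12)$, $\beta\in(0,1)$. Choose $\gamma>0$ with $I-\gamma\bar A$ positive-definite; set $Q:=(I-\gamma\bar A)^{-1}$, $c:=\gamma Q\bar b$, $P:=Q-I$, $\psi(y):=\frac12\langle Py,y\rangle+\langle c,y\rangle+\gamma e_\gamma g(y)$ (so $\nabla\psi(y)=Qy-\operatorname{Prox}_{\gamma g}(y)+c$). Choose $y^0$, $k=0$. If $\nabla\psi(y^k)=0$ stop; else set $v^k:=\operatorname{Prox}_{\gamma g}(y^k)$ and find $d^k$ with $\frac1\gamma(-\nabla\psi(y^k)-Pd^k)\in\partial^2g\big(v^k,\frac1\gamma(y^k-v^k)\big)(Qd^k+\nabla\psi(y^k))$; set $\tau_k=1$ and while $\psi(y^k+\tau_kd^k)>\psi(y^k)+\sigma\tau_k\langle\nabla\psi(y^k),d^k\rangle$ replace $\tau_k$ by $\beta\tau_k$; set $y^{k+1}:=y^k+\tau_kd^k$, increase $k$, repeat. Here $\partial^2g(x,y)(w):=\{z\mid(z,-w)\in N_{\operatorname{gph}\partial g}(x,y)\}$ with $N$ the limiting normal cone: $N_\Omega(\bar z)$ consists of $v$ such that $z_k\to\bar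 z$, $z_k\in\Omega$, $v_k\to v$, $v_k\in\widehat N_\Omega(z_k)$, with $\widehat N_\Omega(\bar z):=\{v\mid\limsup_{z\to\bar z,z\in\Omega}\langle v,z-\bar z\rangle/\|z-\bar z\|\le0\}$. Tilt stability: $\bar x$ is a tilt-stable local minimizer of $\varphi$ if for some $\gamma'>0$ the map $v\mapsto\operatorname{argmin}\{\varphi(x)-\langle v,x\rangle\mid x\in\mathbb{B}_{\gamma'}(\bar x)\}$ is single-valued and Lipschitz near $0$ with value $\{\bar x\}$ at $0$. Q-superlinear: $\|y^{k+1}-\bar y\|/\|y^k-\bar y\|\to0$. *)

theory Defs
  imports "HOL-Analysis.Analysis"
begin

text \<open>Regular (Frechet) normal cone: the limsup condition written out in epsilon-delta form.\<close>
definition regular_normal :: "'a::real_inner set \<Rightarrow> 'a \<Rightarrow> 'a set" where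
  "regular_normal \<Omega> zb = {v. \<forall>e>0. \<exists>d>0. \<forall>z\<in>\<Omega>. norm (z - zb) < d \<longrightarrow>
      v \<bullet> (z - zb) \<le> e * norm (z - zb)}"

definition limiting_normal :: "'a::real_inner set \<Rightarrow> 'a \<Rightarrow> 'a set" where
  "limiting_normal \<Omega> zb = {v. \<exists>zs vs. (\<forall>k. zs k \<in> \<Omega>) \<and> zs \<longlonglongrightarrow> zb \<and> vs \<longlonglongrightarrow> v \<and>
      (\<forall>k. vs k \<in> regular_normal \<Omega> (zs k))}"

definition regular_subdiff :: "('a::real_inner \<Rightarrow> real) \<Rightarrow> 'a \<Rightarrow> 'a set" where
  "regular_subdiff g x = {v. \<forall>e>0. \<exists>d>0. \<forall>u. norm (u - x) < d \<longrightarrow>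
      g u - g x - v \<bullet> (u - x) \<ge> - e * norm (u - x)}"

definition limiting_subdiff :: "('a::real_inner \<Rightarrow> real) \<Rightarrow> 'a \<Rightarrow> 'a set" where
  "limiting_subdiff g x = {v. \<exists>xs vs. xs \<longlonglongrightarrow> x \<and> (\<lambda>k. g (xs k)) \<longlonglongrightarrow> g x \<and>
      vs \<longlonglongrightarrow> v \<and> (\<forall>k. vs k \<in> regular_subdiff g (xs k))}"

definition subdiff_graph :: "('a::real_inner \<Rightarrow> real) \<Rightarrow> ('a \<times> 'a) set" where
  "subdiff_graph g = {(x, v). v \<in> limiting_subdiff g x}"

text \<open>Second-order subdifferential (coderivative of the subdifferential).\<close>
definition second_subdiff :: "('a::real_inner \<Rightarrow> real) \<Rightarrow> 'a \<Rightarrow> 'a \<Rightarrow> 'a \<Rightarrow> 'a set" where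
  "second_subdiff g x y w = {z. (z, - w) \<in> limiting_normal (subdiff_graph g) (x, y)}"

definition moreau_env :: "real \<Rightarrow> ('a::real_normed_vector \<Rightarrow> real) \<Rightarrow> 'a \<Rightarrow> real" where
  "moreau_env \<gamma> g x = (INF y. g y + (norm (y - x))\<^sup>2 / (2 * \<gamma>))"

definition prox :: "real \<Rightarrow> ('a::real_normed_vector \<Rightarrow> real) \<Rightarrow> 'a \<Rightarrow> 'a" where
  "prox \<gamma> g x = (THE y. \<forall>z. g y + (norm (y - x))\<^sup>2 / (2 * \<gamma>) \<le> g z + (norm (z - x))\<^sup>2 / (2 * \<gamma>))"

definition tilt_stable :: "('a::real_inner \<Rightarrow> real) \<Rightarrow> 'a \<Rightarrow> bool" where
  "tilt_stable \<phi> xb \<longleftrightarrow> (\<exists>\<gamma>'>0. \<exists>\<delta>>0. \<exists>L f.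
     (\<forall>v\<in>ball 0 \<delta>. {x \<in> cball xb \<gamma>'. \<forall>z\<in>cball xb \<gamma>'. \<phi> x - v \<bullet> x \<le> \<phi> z - v \<bullet> z} = {f v})
     \<and> L-lipschitz_on (ball 0 \<delta>) f \<and> f 0 = xb)"

definition q_superlinear :: "(nat \<Rightarrow> 'a::real_normed_vector) \<Rightarrow> 'a \<Rightarrow> bool" where
  "q_superlinear y yb \<longleftrightarrow> ((\<lambda>k. norm (y (Suc k) - yb) / norm (y k - yb)) \<longlonglongrightarrow> 0)"

definition pos_def :: "real^'n^'n \<Rightarrow> bool" where
  "pos_def M \<longleftrightarrow> (\<forall>x. x \<noteq> 0 \<longrightarrow> 0 < x \<bullet> (M *v x))"

definition gdna_Q :: "real^'n^'n \<Rightarrow> real \<Rightarrow> real^'n^'n" where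
  "gdna_Q Ab \<gamma> = matrix_inv (mat 1 - \<gamma> *\<^sub>R Ab)"

definition gdna_c :: "real^'n^'n \<Rightarrow> real^'n \<Rightarrow> real \<Rightarrow> real^'n" where
  "gdna_c Ab bb \<gamma> = \<gamma> *\<^sub>R (gdna_Q Ab \<gamma> *v bb)"

definition gdna_P :: "real^'n^'n \<Rightarrow> real \<Rightarrow> real^'n^'n" where
  "gdna_P Ab \<gamma> = gdna_Q Ab \<gamma> - mat 1"

definition gdna_psi :: "real^'n^'n \<Rightarrow> real^'n \<Rightarrow> (real^'n \<Rightarrow> real) \<Rightarrow> real \<Rightarrow> real^'n \<Rightarrow> real" where
  "gdna_psi Ab bb g \<gamma> y = 1/2 * ((gdna_P Ab \<gamma> *v y) \<bullet> y) + gdna_c Ab bb \<gamma> \<bullet> y + \<gamma> * moreau_env \<gamma> g y"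

definition gdna_grad :: "real^'n^'n \<Rightarrow> real^'n \<Rightarrow> (real^'n \<Rightarrow> real) \<Rightarrow> real \<Rightarrow> real^'n \<Rightarrow> real^'n" where
  "gdna_grad Ab bb g \<gamma> y = gdna_Q Ab \<gamma> *v y - prox \<gamma> g y + gdna_c Ab bb \<gamma>"

definition gdna_dir :: "real^'n^'n \<Rightarrow> real^'n \<Rightarrow> (real^'n \<Rightarrow> real) \<Rightarrow> real \<Rightarrow> real^'n \<Rightarrow> real^'n \<Rightarrow> bool" where
  "gdna_dir Ab bb g \<gamma> y d \<longleftrightarrow>
     (let v = prox \<gamma> g y; gr = gdna_grad Ab bb g \<gamma> y in
      (1/\<gamma>) *\<^sub>R (- gr - gdna_P Ab \<gamma> *v d)
        \<in> second_subdiff g v ((1/\<gamma>) *\<^sub>R (y - v)) (gdna_Q Ab \<gamma> *v d + gr))"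

definition gdna_armijo :: "real^'n^'n \<Rightarrow> real^'n \<Rightarrow> (real^'n \<Rightarrow> real) \<Rightarrow> real \<Rightarrow> real \<Rightarrow> real^'n \<Rightarrow> real^'n \<Rightarrow> real \<Rightarrow> bool" where
  "gdna_armijo Ab bb g \<gamma> \<sigma> y d \<tau> \<longleftrightarrow>
     gdna_psi Ab bb g \<gamma> (y + \<tau> *\<^sub>R d) \<le> gdna_psi Ab bb g \<gamma> y + \<sigma> * \<tau> * (gdna_grad Ab bb g \<gamma> y \<bullet> d)"

definition gdna_well_defined :: "real^'n^'n \<Rightarrow> real^'n \<Rightarrow> (real^'n \<Rightarrow> real) \<Rightarrow> real \<Rightarrow> real \<Rightarrow> real \<Rightarrow> bool" where
  "gdna_well_defined Ab bb g \<gamma> \<sigma> \<beta> \<longleftrightarrow>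
     (\<forall>y. gdna_grad Ab bb g \<gamma> y \<noteq> 0 \<longrightarrow>
        (\<exists>d. gdna_dir Ab bb g \<gamma> y d) \<and>
        (\<forall>d. gdna_dir Ab bb g \<gamma> y d \<longrightarrow> (\<exists>j::nat. gdna_armijo Ab bb g \<gamma> \<sigma> y d (\<beta> ^ j))))"

text \<open>A run of the algorithm (from arbitrary starting point y 0); after the stopping test
  succeeds the sequence is continued constantly.\<close>
definition gdna_run :: "real^'n^'n \<Rightarrow> real^'n \<Rightarrow> (real^'n \<Rightarrow> real) \<Rightarrow> real \<Rightarrow> real \<Rightarrow> real \<Rightarrow>
    (nat \<Rightarrow> real^'n) \<Rightarrow> (nat \<Rightarrow> real^'n) \<Rightarrow> bool" where
  "gdna_run Ab bb g \<gamma> \<sigma> \<beta> y d \<longleftrightarrow>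
     (\<forall>k. (gdna_grad Ab bb g \<gamma> (y k) = 0 \<longrightarrow> y (Suc k) = y k) \<and>
          (gdna_grad Ab bb g \<gamma> (y k) \<noteq> 0 \<longrightarrow>
             gdna_dir Ab bb g \<gamma> (y k) (d k) \<and>
             y (Suc k) = y k + (\<beta> ^ (LEAST j. gdna_armijo Ab bb g \<gamma> \<sigma> (y k) (d k) (\<beta> ^ j))) *\<^sub>R d k))"

definition l1norm :: "real^'n \<Rightarrow> real" where
  "l1norm x = (\<Sum>i\<in>UNIV. \<bar>x $ i\<bar>)"

definition lasso :: "real^'n^'m \<Rightarrow> real^'m \<Rightarrow> real \<Rightarrow> real^'n \<Rightarrow> real" where
  "lasso A b \<mu> x = 1/2 * (norm (A *v x - b))\<^sup>2 + \<mu> * l1norm x"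

definition lasso_Abar :: "real^'n^'m \<Rightarrow> real^'n^'n" where
  "lasso_Abar A = transpose A ** A"

definition lasso_bbar :: "real^'n^'m \<Rightarrow> real^'m \<Rightarrow> real^'n" where
  "lasso_bbar A b = - (transpose A *v b)"

definition lasso_g :: "real \<Rightarrow> real^'n \<Rightarrow> real" where
  "lasso_g \<mu> x = \<mu> * l1norm x"

end

theory Submission
  imports Defs
begin
definition soft :: "real \<Rightarrow> real \<Rightarrow> real" where
  "soft \<theta> t = (if t > \<theta> then t - \<theta> else if t < -\<theta> then t + \<theta> else 0)"
definition Hf :: "real \<Rightarrow> real \<Rightarrow> real" where
  "Hf \<theta> t = \<theta> * \<bar>soft \<theta> t\<bar> + (soft \<theta> t - t)\<^sup>2 / 2"

lemma Hf_eq: "\<theta> > 0 \<Longrightarrow> Hf \<theta> t = (if t > \<theta> then \<theta>*t - \<theta>*\<theta>/2 else if t < -\<theta> then -\<theta>*t - \<theta>*\<theta>/2 else t*t/2)"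
  unfolding Hf_def soft_def by (auto simp: power2_eq_square algebra_simps)

lemma Hf_cases: assumes "\<theta> > 0"
  shows "\<theta> < t \<Longrightarrow> Hf \<theta> t = \<theta>*t - \<theta>*\<theta>/2" "t < -\<theta> \<Longrightarrow> Hf \<theta> t = -\<theta>*t - \<theta>*\<theta>/2"
    "\<not> \<theta> < t \<Longrightarrow> \<not> t < -\<theta> \<Longrightarrow> Hf \<theta> t = t*t/2"
    "\<theta> < t \<Longrightarrow> soft \<theta> t = t - \<theta>" "t < -\<theta> \<Longrightarrow> soft \<theta> t = t + \<theta>"
    "\<not> \<theta> < t \<Longrightarrow> \<not> t < -\<theta> \<Longrightarrow> soft \<theta> t = 0"
  using assms by (auto simp: Hf_eq soft_def)

lemma Hf_upper: assumes "\<theta> > 0"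
  shows "Hf \<theta> (t + w) \<le> Hf \<theta> t + (t - soft \<theta> t) * w + w\<^sup>2 / 2"
proof -
  have H0: "0 \<le> t*t + w*w + \<theta>*\<theta> + 2*(t*w) - 2*(\<theta>*t) - 2*(\<theta>*w)"
  proof -
    have "0 \<le> (t+w-\<theta>)*(t+w-\<theta>)" by simp
    also have "(t+w-\<theta>)*(t+w-\<theta>) = t*t + w*w + \<theta>*\<theta> + 2*(t*w) - 2*(\<theta>*t) - 2*(\<theta>*w)" by (simp add: algebra_simps)
    finally show ?thesis .
  qed
  have H1: "0 \<le> t*t + w*w + \<theta>*\<theta> + 2*(t*w) + 2*(\<theta>*t) + 2*(\<theta>*w)"
  proof -
    have "0 \<le> (t+w+\<theta>)*(t+w+\<theta>)" by simp
    also have "(t+w+\<theta>)*(t+w+\<theta>) = t*t + w*w + \<theta>*\<theta> + 2*(t*w) + 2*(\<theta>*t) + 2*(\<theta>*w)" by (simp add: algebra_simps)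
    finally show ?thesis .
  qed
  have H2: "0 \<le> w*w - 4*(\<theta>*w) + 4*(\<theta>*\<theta>)"
  proof -
    have "0 \<le> (w-2*\<theta>)*(w-2*\<theta>)" by simp
    also have "(w-2*\<theta>)*(w-2*\<theta>) = w*w - 4*(\<theta>*w) + 4*(\<theta>*\<theta>)" by (simp add: algebra_simps)
    finally show ?thesis .
  qed
  have H3: "0 \<le> w*w + 4*(\<theta>*w) + 4*(\<theta>*\<theta>)"
  proof -
    have "0 \<le> (w+2*\<theta>)*(w+2*\<theta>)" by simp
    also have "(w+2*\<theta>)*(w+2*\<theta>) = w*w + 4*(\<theta>*w) + 4*(\<theta>*\<theta>)" by (simp add: algebra_simps)
    finally show ?thesis .
  qed
  have H4: "0 \<le> w*w" by simp
  have H5: "0 \<le> - t*t + 2*(\<theta>*t) - \<theta>*\<theta> - 2*(t*w) + 2*(\<theta>*w)" if "t > \<theta>" "\<not> \<theta> < t+w" "\<not> t+w < -\<theta>"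
  proof -
    have "0 \<le> (t - \<theta>)*(\<theta> - t - 2*w)" using that by (intro mult_nonneg_nonneg) auto
    also have "(t - \<theta>)*(\<theta> - t - 2*w) = - t*t + 2*(\<theta>*t) - \<theta>*\<theta> - 2*(t*w) + 2*(\<theta>*w)" by (simp add: algebra_simps)
    finally show ?thesis .
  qed
  have H6: "0 \<le> - t*t - 2*(\<theta>*t) - \<theta>*\<theta> - 2*(t*w) - 2*(\<theta>*w)" if "t < -\<theta>" "\<not> \<theta> < t+w" "\<not> t+w < -\<theta>"
  proof -
    have "0 \<le> (-t - \<theta>)*(2*w + t + \<theta>)" using that by (intro mult_nonneg_nonneg) auto
    also have "(-t - \<theta>)*(2*w + t + \<theta>) = - t*t - 2*(\<theta>*t) - \<theta>*\<theta> - 2*(t*w) - 2*(\<theta>*w)" by (simp add: algebra_simps)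
    finally show ?thesis .
  qed
  note c = Hf_cases[OF assms, of t] Hf_cases[OF assms, of "t+w"]
  have R: "Hf \<theta> (t+w) = (if \<theta> < t+w then \<theta>*t + \<theta>*w - \<theta>*\<theta>/2 else if t+w < -\<theta> then -\<theta>*t - \<theta>*w - \<theta>*\<theta>/2
     else (t*t + 2*(t*w) + w*w)/2)"
    using c(7-9) by (auto simp: algebra_simps)
  have L: "Hf \<theta> t + (t - soft \<theta> t) * w + w\<^sup>2 / 2 = (if \<theta> < t then \<theta>*t - \<theta>*\<theta>/2 + \<theta>*w + w*w/2
     else if t < -\<theta> then -\<theta>*t - \<theta>*\<theta>/2 - \<theta>*w + w*w/2 else t*t/2 + t*w + w*w/2)"
    using assms by (cases "\<theta> < t"; cases "t < -\<theta>"; simp add: c power2_eq_square algebra_simps)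
  have X: "\<And>P. (\<theta> < t \<Longrightarrow> P) \<Longrightarrow> (t < -\<theta> \<Longrightarrow> P) \<Longrightarrow> (\<not> \<theta> < t \<Longrightarrow> \<not> t < -\<theta> \<Longrightarrow> P) \<Longrightarrow> P" by linarith
  have Y: "\<And>P. (\<theta> < t+w \<Longrightarrow> P) \<Longrightarrow> (t+w < -\<theta> \<Longrightarrow> P) \<Longrightarrow> (\<not> \<theta> < t+w \<Longrightarrow> \<not> t+w < -\<theta> \<Longrightarrow> P) \<Longrightarrow> P" by linarith
  have n1: "t < -\<theta> \<Longrightarrow> \<not> \<theta> < t" "t+w < -\<theta> \<Longrightarrow> \<not> \<theta> < t+w" using assms by linarith+
  show ?thesis
  proof (rule X; rule Y)
    show ?thesis if "\<theta> < t" and "\<theta> < t+w" 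
      using that unfolding R L using assms H0 H1 H2 H3 H4 mult_strict_left_mono[OF that(1) assms] mult_strict_left_mono[OF that(2) assms] by (simp add: n1; linarith)
  next
    show ?thesis if "\<theta> < t" and "t+w < -\<theta>" 
      using that unfolding R L using assms H0 H1 H2 H3 H4 mult_strict_left_mono[OF that(1) assms] mult_strict_left_mono[OF that(2) assms] by (simp add: n1; linarith)
  next
    show ?thesis if "\<theta> < t" and "\<not> \<theta> < t+w" and "\<not> t+w < -\<theta>" 
      using that unfolding R L using assms H0 H1 H2 H3 H4 H5[OF that] mult_strict_left_mono[OF that(1) assms] by (simp add: n1; linarith)
  next
    show ?thesis if "t < -\<theta>" and "\<theta> < t+w" 
      using that unfolding R L using assms H0 H1 H2 H3 H4 mult_strict_left_mono[OF that(1) assms] mult_strict_left_mono[OF that(2) assms] by (simp add: n1; linarith)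
  next
    show ?thesis if "t < -\<theta>" and "t+w < -\<theta>" 
      using that unfolding R L using assms H0 H1 H2 H3 H4 mult_strict_left_mono[OF that(1) assms] mult_strict_left_mono[OF that(2) assms] by (simp add: n1; linarith)
  next
    show ?thesis if "t < -\<theta>" and "\<not> \<theta> < t+w" and "\<not> t+w < -\<theta>" 
      using that unfolding R L using assms H0 H1 H2 H3 H4 H6[OF that] mult_strict_left_mono[OF that(1) assms] by (simp add: n1; linarith)
  next
    show ?thesis if "\<not> \<theta> < t" and "\<not> t < -\<theta>" and "\<theta> < t+w" 
      using that unfolding R L using assms H0 H1 H2 H3 H4 mult_strict_left_mono[OF that(3) assms] by (simp add: n1; linarith)
  next
    show ?thesis if "\<not> \<theta> < t" and "\<not> t < -\<theta>" and "t+w < -\<theta>" 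
      using that unfolding R L using assms H0 H1 H2 H3 H4 mult_strict_left_mono[OF that(3) assms] by (simp add: n1; linarith)
  next
    show ?thesis if "\<not> \<theta> < t" and "\<not> t < -\<theta>" and "\<not> \<theta> < t+w" and "\<not> t+w < -\<theta>" 
      using that unfolding R L using assms H0 H1 H2 H3 H4 by (simp add: n1; linarith)
  qed
qed

lemma soft_lip: "\<theta> > 0 \<Longrightarrow> \<bar>soft \<theta> a - soft \<theta> b\<bar> \<le> \<bar>a - b\<bar>"
  unfolding soft_def by auto

lemma Hf_nonneg: "\<theta> > 0 \<Longrightarrow> Hf \<theta> t \<ge> 0"
  unfolding Hf_def by auto

definition near1 :: "real \<Rightarrow> real \<Rightarrow> real \<Rightarrow> bool" where
  "near1 \<theta> t tb \<longleftrightarrow> (t > \<theta> \<and> tb \<ge> \<theta>) \<or> (t < -\<theta> \<and> tb \<le> -\<theta>) \<or> (\<bar>t\<bar> < \<theta> \<and> \<bar>tb\<bar> \<le> \<theta>) \<or> t = tb"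

lemma Hf_trap: assumes "\<theta> > 0" "near1 \<theta> t tb"
  shows "Hf \<theta> t - Hf \<theta> tb = ((t - soft \<theta> t) + (tb - soft \<theta> tb)) * (t - tb) / 2"
  using assms unfolding Hf_eq[OF assms(1)] soft_def near1_def
  by (cases "\<theta> < t"; cases "t < -\<theta>"; cases "\<theta> < tb"; cases "tb < -\<theta>"; simp add: algebra_simps; smt (verit))

lemma near1_soft: assumes "\<theta> > 0" "near1 \<theta> t tb"
  shows "(soft \<theta> t - soft \<theta> tb = t - tb \<and> \<bar>t\<bar> > \<theta>) \<or> (soft \<theta> t - soft \<theta> tb = 0 \<and> \<bar>t\<bar> < \<theta>) \<or> t = tb"
  using assms unfolding soft_def near1_def by auto

lemma near1_close: assumes "\<theta> > 0" "\<bar>t - tb\<bar> < (if \<bar>tb\<bar> = \<theta> then \<theta> else \<bar>\<bar>tb\<bar> - \<theta>\<bar>)"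
  shows "near1 \<theta> t tb"
  using assms unfolding near1_def by (auto split: if_splits)

lemma prox1: assumes "\<mu> > 0" "\<gamma> > 0"
  shows "\<mu> * \<bar>z\<bar> + (z - t)\<^sup>2 / (2*\<gamma>) \<ge> \<mu> * \<bar>soft (\<gamma>*\<mu>) t\<bar> + (soft (\<gamma>*\<mu>) t - t)\<^sup>2 / (2*\<gamma>) + (z - soft (\<gamma>*\<mu>) t)\<^sup>2 / (2*\<gamma>)"
proof -
  let ?s = "soft (\<gamma>*\<mu>) t"
  have tz: "\<bar>t\<bar> \<le> \<gamma>*\<mu> \<Longrightarrow> t * z \<le> \<gamma>*\<mu>*\<bar>z\<bar>"
  proof -
    assume h: "\<bar>t\<bar> \<le> \<gamma>*\<mu>"
    have "t*z \<le> \<bar>t\<bar>*\<bar>z\<bar>" by (metis abs_ge_self abs_mult)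
    also have "\<dots> \<le> \<gamma>*\<mu>*\<bar>z\<bar>" using h by (simp add: mult_right_mono)
    finally show ?thesis .
  qed
  have sub: "\<mu> * \<bar>z\<bar> \<ge> \<mu> * \<bar>?s\<bar> + ((t - ?s)/\<gamma>) * (z - ?s)"
  proof (cases "t > \<gamma>*\<mu>")
    case True
    hence "?s = t - \<gamma>*\<mu>" "(t - ?s)/\<gamma> = \<mu>" using assms by (auto simp: soft_def)
    moreover have "\<mu> * z \<le> \<mu> * \<bar>z\<bar>" using assms by auto
    ultimately show ?thesis using True assms by (simp add: algebra_simps)
  next
    case F1: False
    show ?thesis
    proof (cases "t < -(\<gamma>*\<mu>)")
      case True
      hence "?s = t + \<gamma>*\<mu>" "(t - ?s)/\<gamma> = -\<mu>" using assms F1 by (auto simp: soft_def)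
      moreover have "-\<mu> * z \<le> \<mu> * \<bar>z\<bar>" using assms
        by (metis abs_ge_minus_self abs_minus_cancel abs_mult abs_of_pos minus_mult_left mult_left_mono less_imp_le)
      ultimately show ?thesis using True assms by (simp add: algebra_simps)
    next
      case False
      hence "?s = 0" "\<bar>t\<bar> \<le> \<gamma>*\<mu>" using F1 by (auto simp: soft_def)
      moreover have "(t / \<gamma>) * z \<le> \<mu> * \<bar>z\<bar>" using tz[OF \<open>\<bar>t\<bar> \<le> \<gamma>*\<mu>\<close>] assms
        by (simp add: field_simps)
      ultimately show ?thesis by simp
    qed
  qed
  have e1: "(z - t)\<^sup>2 = (?s - t)\<^sup>2 + (z - ?s)\<^sup>2 - 2*((t - ?s) * (z - ?s))"
    by (simp add: power2_eq_square algebra_simps)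
  have e2: "2*((t - ?s) * (z - ?s)) / (2*\<gamma>) = ((t - ?s)/\<gamma>) * (z - ?s)" using assms by simp
  have "(z - t)\<^sup>2 / (2*\<gamma>) = (?s - t)\<^sup>2 / (2*\<gamma>) + (z - ?s)\<^sup>2 / (2*\<gamma>) - ((t - ?s)/\<gamma>) * (z - ?s)"
    unfolding e1 e2[symmetric] by (simp add: diff_divide_distrib add_divide_distrib)
  thus ?thesis using sub by linarith
qed

lemma soft_props: assumes "\<theta> > 0"
  shows "soft \<theta> t \<noteq> 0 \<longleftrightarrow> \<bar>t\<bar> > \<theta>" "\<bar>t - soft \<theta> t\<bar> < \<theta> \<longleftrightarrow> \<bar>t\<bar> < \<theta>"
    "\<bar>t - soft \<theta> t\<bar> \<le> \<theta>" "soft \<theta> t > 0 \<Longrightarrow> t - soft \<theta> t = \<theta>" "soft \<theta> t < 0 \<Longrightarrow> t - soft \<theta> t = -\<theta>"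
    "\<bar>t\<bar> \<le> \<theta> \<Longrightarrow> soft \<theta> t = 0" "\<bar>t\<bar> = \<theta> \<Longrightarrow> t - soft \<theta> t = t"
  using assms unfolding soft_def by auto

definition Svec :: "real \<Rightarrow> real^'n \<Rightarrow> real^'n" where
  "Svec \<theta> y = (\<chi> i. soft \<theta> (y$i))"

lemma Svec_nth[simp]: "Svec \<theta> y $ i = soft \<theta> (y$i)"
  by (simp add: Svec_def)

lemma inner_sum_cart: "(x::real^'n) \<bullet> y = (\<Sum>i\<in>UNIV. x$i * y$i)"
  by (simp add: inner_vec_def)

lemma norm_sq_cart: "(norm (x::real^'n))\<^sup>2 = (\<Sum>i\<in>UNIV. (x$i)\<^sup>2)"
  unfolding power2_norm_eq_inner inner_sum_cart by (simp add: power2_eq_square)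

lemma g_sum: "lasso_g \<mu> x = (\<Sum>i\<in>UNIV. \<mu> * \<bar>x$i\<bar>)"
  by (simp add: lasso_g_def l1norm_def sum_distrib_left)

definition Phi :: "real \<Rightarrow> real \<Rightarrow> real^'n \<Rightarrow> real^'n \<Rightarrow> real" where
  "Phi \<mu> \<gamma> y z = lasso_g \<mu> z + (norm (z - y))\<^sup>2 / (2 * \<gamma>)"

lemma Phi_strong: assumes "\<mu> > 0" "\<gamma> > 0"
  shows "Phi \<mu> \<gamma> y z \<ge> Phi \<mu> \<gamma> y (Svec (\<gamma>*\<mu>) y) + (norm (z - Svec (\<gamma>*\<mu>) y))\<^sup>2 / (2 * \<gamma>)"
proof -
  have "Phi \<mu> \<gamma> y z = (\<Sum>i\<in>UNIV. \<mu> * \<bar>z$i\<bar> + (z$i - y$i)\<^sup>2 / (2*\<gamma>))"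
    by (simp add: Phi_def g_sum norm_sq_cart sum.distrib sum_divide_distrib)
  also have "\<dots> \<ge> (\<Sum>i\<in>UNIV. \<mu> * \<bar>soft (\<gamma>*\<mu>) (y$i)\<bar> + (soft (\<gamma>*\<mu>) (y$i) - y$i)\<^sup>2 / (2*\<gamma>)
       + (z$i - soft (\<gamma>*\<mu>) (y$i))\<^sup>2 / (2*\<gamma>))"
    by (rule sum_mono) (rule prox1[OF assms])
  also have "(\<Sum>i\<in>UNIV. \<mu> * \<bar>soft (\<gamma>*\<mu>) (y$i)\<bar> + (soft (\<gamma>*\<mu>) (y$i) - y$i)\<^sup>2 / (2*\<gamma>)
       + (z$i - soft (\<gamma>*\<mu>) (y$i))\<^sup>2 / (2*\<gamma>)) = Phi \<mu> \<gamma> y (Svec (\<gamma>*\<mu>) y) + (norm (z - Svec (\<gamma>*\<mu>) y))\<^sup>2 / (2 * \<gamma>)"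
    by (simp add: Phi_def g_sum norm_sq_cart sum.distrib sum_divide_distrib)
  finally show ?thesis .
qed

lemma prox_eq: assumes "\<mu> > 0" "\<gamma> > 0"
  shows "prox \<gamma> (lasso_g \<mu>) y = Svec (\<gamma>*\<mu>) y"
  unfolding prox_def
proof (rule the_equality)
  show "\<forall>z. lasso_g \<mu> (Svec (\<gamma>*\<mu>) y) + (norm (Svec (\<gamma>*\<mu>) y - y))\<^sup>2 / (2 * \<gamma>) \<le> lasso_g \<mu> z + (norm (z - y))\<^sup>2 / (2 * \<gamma>)"
    using Phi_strong[OF assms, of y] assms unfolding Phi_def
    by (smt (verit, best) divide_nonneg_pos zero_le_power2)
next
  fix x assume h: "\<forall>z. lasso_g \<mu> x + (norm (x - y))\<^sup>2 / (2 * \<gamma>) \<le> lasso_g \<mu> z + (norm (z - y))\<^sup>2 / (2 * \<gamma>)"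
  have "Phi \<mu> \<gamma> y x \<le> Phi \<mu> \<gamma> y (Svec (\<gamma>*\<mu>) y)" using h unfolding Phi_def by blast
  with Phi_strong[OF assms, of y x] have "(norm (x - Svec (\<gamma>*\<mu>) y))\<^sup>2 / (2 * \<gamma>) \<le> 0" by linarith
  hence "(norm (x - Svec (\<gamma>*\<mu>) y))\<^sup>2 \<le> 0" using assms by (simp add: divide_le_0_iff)
  thus "x = Svec (\<gamma>*\<mu>) y" by simp
qed

lemma moreau_eq: assumes "\<mu> > 0" "\<gamma> > 0"
  shows "moreau_env \<gamma> (lasso_g \<mu>) y = Phi \<mu> \<gamma> y (Svec (\<gamma>*\<mu>) y)"
  unfolding moreau_env_def
proof (rule cInf_eq_minimum)
  show "Phi \<mu> \<gamma> y (Svec (\<gamma>*\<mu>) y) \<in> range (\<lambda>ya. lasso_g \<mu> ya + (norm (ya - y))\<^sup>2 / (2 * \<gamma>))"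
    unfolding Phi_def by blast
next
  fix x assume "x \<in> range (\<lambda>ya. lasso_g \<mu> ya + (norm (ya - y))\<^sup>2 / (2 * \<gamma>))"
  then obtain z where "x = Phi \<mu> \<gamma> y z" unfolding Phi_def by blast
  thus "Phi \<mu> \<gamma> y (Svec (\<gamma>*\<mu>) y) \<le> x" using Phi_strong[OF assms, of y z] assms
    by (smt (verit, best) divide_nonneg_pos zero_le_power2)
qed

lemma moreau_Hf: assumes "\<mu> > 0" "\<gamma> > 0"
  shows "\<gamma> * moreau_env \<gamma> (lasso_g \<mu>) y = (\<Sum>i\<in>UNIV. Hf (\<gamma>*\<mu>) (y$i))"
proof -
  have "\<gamma> * moreau_env \<gamma> (lasso_g \<mu>) y = (\<Sum>i\<in>UNIV. \<gamma> * (\<mu> * \<bar>soft (\<gamma>*\<mu>) (y$i)\<bar> + (soft (\<gamma>*\<mu>) (y$i) - y$i)\<^sup>2 / (2*\<gamma>)))"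
    unfolding moreau_eq[OF assms] Phi_def g_sum norm_sq_cart
    by (simp add: sum.distrib sum_divide_distrib sum_distrib_left distrib_left)
  also have "\<dots> = (\<Sum>i\<in>UNIV. Hf (\<gamma>*\<mu>) (y$i))"
    using assms by (intro sum.cong) (auto simp: Hf_def field_simps)
  finally show ?thesis .
qed

section \<open>Subdifferential graph of the l1 norm\<close>

definition inG :: "real \<Rightarrow> real^'n \<Rightarrow> real^'n \<Rightarrow> bool" where
  "inG \<mu> x \<xi> \<longleftrightarrow> (\<forall>i. \<bar>\<xi>$i\<bar> \<le> \<mu> \<and> (x$i > 0 \<longrightarrow> \<xi>$i = \<mu>) \<and> (x$i < 0 \<longrightarrow> \<xi>$i = -\<mu>))"

lemma axis_comp: "(x + t *\<^sub>R axis i a) $ j = x$j + (if j = i then t*a else 0)"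
  by (simp add: axis_def)

lemma inner_axis_real: "(v::real^'n) \<bullet> axis i a = v$i * a"
  by (simp add: inner_axis)

lemma g_axis: "lasso_g \<mu> (x + t *\<^sub>R axis i a) = lasso_g \<mu> x + (\<mu> * \<bar>x$i + t*a\<bar> - \<mu> * \<bar>x$i\<bar>)"
proof -
  have "lasso_g \<mu> (x + t *\<^sub>R axis i a) - lasso_g \<mu> x = (\<Sum>j\<in>UNIV. \<mu> * \<bar>(x + t *\<^sub>R axis i a)$j\<bar> - \<mu> * \<bar>x$j\<bar>)"
    by (simp add: g_sum sum_subtractf)
  also have "\<dots> = (\<Sum>j\<in>UNIV. if j = i then \<mu> * \<bar>x$i + t*a\<bar> - \<mu> * \<bar>x$i\<bar> else 0)"
    by (intro sum.cong) (auto simp: axis_def)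
  also have "\<dots> = \<mu> * \<bar>x$i + t*a\<bar> - \<mu> * \<bar>x$i\<bar>" by simp
  finally show ?thesis by simp
qed

lemma dir_aux:
  fixes a c :: real
  assumes "\<And>e. e > 0 \<Longrightarrow> \<exists>d>0. \<forall>t. 0 < t \<and> t < d \<longrightarrow> t * a \<le> t * c + e * t"
  shows "a \<le> c"
proof (rule ccontr)
  assume "\<not> a \<le> c"
  hence "(a - c)/2 > 0" by simp
  from assms[OF this] obtain d where d: "d > 0" "\<forall>t. 0 < t \<and> t < d \<longrightarrow> t * a \<le> t * c + (a - c)/2 * t" by blast
  have "d/2 * a \<le> d/2 * c + (a - c)/2 * (d/2)" using d(2)[rule_format, of "d/2"] d(1) by linarith
  moreover have "d/2 * a = (d*a)/2" "d/2 * c = (d*c)/2" "(a - c)/2 * (d/2) = (d*a - d*c)/4" by (simp_all add: algebra_simps)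
  ultimately have "d*a \<le> d*c" by (smt (verit) | simp add: field_simps | linarith)
  moreover have "d*c < d*a" using d \<open>\<not> a \<le> c\<close> by simp
  ultimately show False by linarith
qed

lemma rsub_dir:
  assumes v: "v \<in> regular_subdiff g x" and t0: "t0 > 0"
    and h: "\<And>t. 0 < t \<Longrightarrow> t < t0 \<Longrightarrow> g (x + t *\<^sub>R w) - g x \<le> t * c"
  shows "v \<bullet> w \<le> c"
proof (rule dir_aux)
  fix e :: real assume e: "e > 0"
  define e' where "e' = e / (norm w + 1)"
  have e': "e' > 0" using e by (simp add: e'_def add_nonneg_pos)
  from v e' obtain d where d: "d > 0" "\<forall>u. norm (u - x) < d \<longrightarrow> g u - g x - v \<bullet> (u - x) \<ge> - e' * norm (u - x)"
    unfolding regular_subdiff_def by blast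
  define d' where "d' = min t0 (d / (norm w + 1))"
  have d': "d' > 0" using d t0 by (simp add: d'_def add_nonneg_pos)
  show "\<exists>d>0. \<forall>t. 0 < t \<and> t < d \<longrightarrow> t * (v \<bullet> w) \<le> t * c + e * t"
  proof (intro exI[of _ d'] conjI allI impI d')
    fix t assume t: "0 < t \<and> t < d'"
    have nw: "norm w < norm w + 1" by simp
    have "norm (t *\<^sub>R w) = t * norm w" using t by simp
    also have "\<dots> \<le> t * (norm w + 1)" using t by simp
    also have "\<dots> < d"
    proof -
      have "t < d / (norm w + 1)" using t by (simp add: d'_def)
      thus ?thesis by (simp add: pos_less_divide_eq add_nonneg_pos)
    qed
    finally have n: "norm ((x + t *\<^sub>R w) - x) < d" by simp
    from d(2)[rule_format, OF n]
    have "g (x + t *\<^sub>R w) - g x - t * (v \<bullet> w) \<ge> - e' * (t * norm w)" using t by simp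
    moreover have "e' * (t * norm w) \<le> e * t"
    proof -
      have pos: "norm w + 1 > 0" using norm_ge_zero[of w] by linarith
      have "e' * norm w = (e * norm w) / (norm w + 1)" by (simp add: e'_def)
      also have "\<dots> \<le> e" using pos e by (simp add: divide_le_eq algebra_simps)
      finally have "e' * norm w \<le> e" .
      thus ?thesis using t by (simp add: mult.commute mult.left_commute mult_left_mono)
    qed
    moreover have "g (x + t *\<^sub>R w) - g x \<le> t * c" using h t d'_def by simp
    ultimately show "t * (v \<bullet> w) \<le> t * c + e * t" by linarith
  qed
qed

lemma rnorm_dir:
  assumes v: "v \<in> regular_normal \<Omega> zb" and t0: "t0 > 0"
    and h: "\<And>t. 0 < t \<Longrightarrow> t < t0 \<Longrightarrow> zb + t *\<^sub>R w \<in> \<Omega>"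
  shows "v \<bullet> w \<le> 0"
proof (rule dir_aux)
  fix e :: real assume e: "e > 0"
  define e' where "e' = e / (norm w + 1)"
  have e': "e' > 0" using e by (simp add: e'_def add_nonneg_pos)
  from v e' obtain d where d: "d > 0" "\<forall>z\<in>\<Omega>. norm (z - zb) < d \<longrightarrow> v \<bullet> (z - zb) \<le> e' * norm (z - zb)"
    unfolding regular_normal_def by blast
  define d' where "d' = min t0 (d / (norm w + 1))"
  have d': "d' > 0" using d t0 by (simp add: d'_def add_nonneg_pos)
  show "\<exists>d>0. \<forall>t. 0 < t \<and> t < d \<longrightarrow> t * (v \<bullet> w) \<le> t * 0 + e * t"
  proof (intro exI[of _ d'] conjI allI impI d')
    fix t assume t: "0 < t \<and> t < d'"
    have "norm (t *\<^sub>R w) = t * norm w" using t by simp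
    also have "\<dots> \<le> t * (norm w + 1)" using t by simp
    also have "\<dots> < d"
    proof -
      have "t < d / (norm w + 1)" using t by (simp add: d'_def)
      thus ?thesis by (simp add: pos_less_divide_eq add_nonneg_pos)
    qed
    finally have n: "norm ((zb + t *\<^sub>R w) - zb) < d" by simp
    have mem: "zb + t *\<^sub>R w \<in> \<Omega>" using h t d'_def by simp
    from d(2)[rule_format, OF mem n]
    have "t * (v \<bullet> w) \<le> e' * (t * norm w)" using t by simp
    moreover have "e' * (t * norm w) \<le> e * t"
    proof -
      have pos: "norm w + 1 > 0" using norm_ge_zero[of w] by linarith
      have "e' * norm w = (e * norm w) / (norm w + 1)" by (simp add: e'_def)
      also have "\<dots> \<le> e" using pos e by (simp add: divide_le_eq algebra_simps)
      finally have "e' * norm w \<le> e" .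
      thus ?thesis using t by (metis mult.commute mult.left_commute less_eq_real_def mult_left_mono)
    qed
    ultimately show "t * (v \<bullet> w) \<le> t * 0 + e * t" by linarith
  qed
qed


lemma abs_step1: assumes "(\<mu>::real) \<ge> 0" "t \<ge> 0" shows "\<mu>*\<bar>p + t*a\<bar> - \<mu>*\<bar>p\<bar> \<le> t*(\<mu>*\<bar>a\<bar>)"
proof -
  have "\<bar>p + t*a\<bar> \<le> \<bar>p\<bar> + t*\<bar>a\<bar>" using assms(2) abs_triangle_ineq[of p "t*a"] by (simp add: abs_mult)
  hence "\<mu>*\<bar>p + t*a\<bar> \<le> \<mu>*(\<bar>p\<bar> + t*\<bar>a\<bar>)" using assms(1) by (rule mult_left_mono)
  thus ?thesis by (simp add: algebra_simps)
qed

lemma rsub_inG: assumes mu: "\<mu> > 0" and v: "v \<in> regular_subdiff (lasso_g \<mu>) x" shows "inG \<mu> x v"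
  unfolding inG_def
proof (intro allI conjI impI)
  fix i
  have "v \<bullet> axis i 1 \<le> \<mu> * \<bar>1\<bar>"
  proof (rule rsub_dir[OF v zero_less_one])
    fix t :: real assume "0 < t"
    thus "lasso_g \<mu> (x + t *\<^sub>R axis i 1) - lasso_g \<mu> x \<le> t * (\<mu> * \<bar>1\<bar>)"
      using abs_step1[OF less_imp_le[OF mu] less_imp_le, of t "x$i" 1] by (simp add: g_axis)
  qed
  hence up: "v$i \<le> \<mu>" by (simp add: inner_axis_real)
  have "v \<bullet> axis i (-1) \<le> \<mu> * \<bar>-1\<bar>"
  proof (rule rsub_dir[OF v zero_less_one])
    fix t :: real assume "0 < t"
    thus "lasso_g \<mu> (x + t *\<^sub>R axis i (-1)) - lasso_g \<mu> x \<le> t * (\<mu> * \<bar>-1\<bar>)"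
      using abs_step1[OF less_imp_le[OF mu] less_imp_le, of t "x$i" "-1"] by (simp add: g_axis)
  qed
  hence lo: "- v$i \<le> \<mu>" by (simp add: inner_axis_real)
  show "\<bar>v$i\<bar> \<le> \<mu>" using up lo by linarith
  {
    assume xi: "x$i > 0"
    have "v \<bullet> axis i (-1) \<le> -\<mu>"
    proof (rule rsub_dir[OF v xi])
      fix t assume "0 < t" "t < x$i"
      thus "lasso_g \<mu> (x + t *\<^sub>R axis i (-1)) - lasso_g \<mu> x \<le> t * -\<mu>"
        by (simp add: g_axis algebra_simps)
    qed
    thus "v$i = \<mu>" using up by (simp add: inner_axis_real)
  }
  {
    assume xi: "x$i < 0"
    have xi': "- x$i > 0" using xi by simp
    have "v \<bullet> axis i 1 \<le> -\<mu>"
    proof (rule rsub_dir[OF v xi'])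
      fix t assume "0 < t" "t < - x$i"
      thus "lasso_g \<mu> (x + t *\<^sub>R axis i 1) - lasso_g \<mu> x \<le> t * -\<mu>"
        by (simp add: g_axis algebra_simps)
    qed
    thus "v$i = -\<mu>" using lo by (simp add: inner_axis_real)
  }
qed

lemma inG_rsub: assumes mu: "\<mu> > 0" and h: "inG \<mu> x v" shows "v \<in> regular_subdiff (lasso_g \<mu>) x"
proof -
  have "lasso_g \<mu> u - lasso_g \<mu> x - v \<bullet> (u - x) \<ge> 0" for u
  proof -
    have "lasso_g \<mu> u - lasso_g \<mu> x - v \<bullet> (u - x) = (\<Sum>i\<in>UNIV. \<mu>*\<bar>u$i\<bar> - \<mu>*\<bar>x$i\<bar> - v$i * (u$i - x$i))"
      by (simp add: g_sum inner_sum_cart sum_subtractf)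
    also have "\<dots> \<ge> 0"
    proof (rule sum_nonneg)
      fix i
      have vi: "\<bar>v$i\<bar> \<le> \<mu>" "x$i > 0 \<Longrightarrow> v$i = \<mu>" "x$i < 0 \<Longrightarrow> v$i = -\<mu>" using h by (auto simp: inG_def)
      have "v$i * u$i \<le> \<mu> * \<bar>u$i\<bar>"
      proof -
        have "v$i * u$i \<le> \<bar>v$i\<bar> * \<bar>u$i\<bar>" by (metis abs_ge_self abs_mult)
        also have "\<dots> \<le> \<mu> * \<bar>u$i\<bar>" using vi(1) by (simp add: mult_right_mono)
        finally show ?thesis .
      qed
      moreover have "v$i * x$i = \<mu> * \<bar>x$i\<bar>"
        using vi by (cases "x$i > 0"; cases "x$i < 0") auto
      ultimately show "0 \<le> \<mu>*\<bar>u$i\<bar> - \<mu>*\<bar>x$i\<bar> - v$i * (u$i - x$i)" by (simp add: algebra_simps)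
    qed
    finally show ?thesis .
  qed
  thus ?thesis unfolding regular_subdiff_def
    by (auto intro!: exI[of _ 1]) (smt (verit) mult_nonneg_nonneg norm_ge_zero)
qed

definition Gs :: "real \<Rightarrow> ((real^'n) \<times> (real^'n)) set" where
  "Gs \<mu> = {(x, \<xi>). inG \<mu> x \<xi>}"

lemma graph_eq: assumes mu: "\<mu> > 0" shows "subdiff_graph (lasso_g \<mu>) = Gs \<mu>"
proof (intro set_eqI iffI)
  fix p assume "p \<in> subdiff_graph (lasso_g \<mu>)"
  then obtain x v where p: "p = (x, v)" and "v \<in> limiting_subdiff (lasso_g \<mu>) x"
    unfolding subdiff_graph_def by auto
  then obtain xs vs where xs: "xs \<longlonglongrightarrow> x" and vs: "vs \<longlonglongrightarrow> v"
    and r: "\<forall>k. vs k \<in> regular_subdiff (lasso_g \<mu>) (xs k)"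
    unfolding limiting_subdiff_def by blast
  have G: "inG \<mu> (xs k) (vs k)" for k using rsub_inG[OF mu] r by blast
  have "inG \<mu> x v" unfolding inG_def
  proof (intro allI conjI impI)
    fix i
    have xi: "(\<lambda>k. xs k $ i) \<longlonglongrightarrow> x $ i" and vi: "(\<lambda>k. vs k $ i) \<longlonglongrightarrow> v $ i"
      using xs vs by (auto intro: tendsto_vec_nth)
    have "(\<lambda>k. \<bar>vs k $ i\<bar>) \<longlonglongrightarrow> \<bar>v $ i\<bar>" using vi by (rule tendsto_rabs)
    thus "\<bar>v$i\<bar> \<le> \<mu>"
      by (rule tendsto_upperbound) (use G in \<open>auto simp: inG_def\<close>)
    {
      assume "x$i > 0"
      hence "eventually (\<lambda>k. xs k $ i > 0) sequentially" using order_tendstoD(1)[OF xi] by blast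
      hence "eventually (\<lambda>k. \<mu> = vs k $ i) sequentially"
        by eventually_elim (use G in \<open>auto simp: inG_def\<close>)
      hence "(\<lambda>k. vs k $ i) \<longlonglongrightarrow> \<mu>" by (rule Lim_transform_eventually[OF tendsto_const])
      thus "v$i = \<mu>" using vi LIMSEQ_unique by blast
    }
    {
      assume "x$i < 0"
      hence "eventually (\<lambda>k. xs k $ i < 0) sequentially" using order_tendstoD(2)[OF xi] by blast
      hence "eventually (\<lambda>k. -\<mu> = vs k $ i) sequentially"
        by eventually_elim (use G in \<open>auto simp: inG_def\<close>)
      hence "(\<lambda>k. vs k $ i) \<longlonglongrightarrow> -\<mu>" by (rule Lim_transform_eventually[OF tendsto_const])
      thus "v$i = -\<mu>" using vi LIMSEQ_unique by blast
    }
  qed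
  thus "p \<in> Gs \<mu>" using p by (simp add: Gs_def)
next
  fix p assume "p \<in> Gs \<mu>"
  then obtain x v where p: "p = (x, v)" and h: "inG \<mu> x v" by (auto simp: Gs_def)
  have "v \<in> limiting_subdiff (lasso_g \<mu>) x"
    unfolding limiting_subdiff_def using inG_rsub[OF mu h]
    by (intro CollectI exI[of _ "\<lambda>k. x"] exI[of _ "\<lambda>k. v"]) auto
  thus "p \<in> subdiff_graph (lasso_g \<mu>)" using p by (simp add: subdiff_graph_def)
qed

lemma inG_upd: assumes "inG \<mu> x \<xi>" "\<And>j. j \<noteq> i \<Longrightarrow> x'$j = x$j \<and> \<xi>'$j = \<xi>$j"
  "\<bar>\<xi>'$i\<bar> \<le> \<mu>" "x'$i > 0 \<Longrightarrow> \<xi>'$i = \<mu>" "x'$i < 0 \<Longrightarrow> \<xi>'$i = -\<mu>"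
  shows "inG \<mu> x' \<xi>'"
  using assms unfolding inG_def by metis

lemma rn_dirx: assumes rn: "(a,b) \<in> regular_normal (Gs \<mu>) (x,\<xi>)" and t0: "t0 > 0"
  and h: "\<And>t. 0 < t \<Longrightarrow> t < t0 \<Longrightarrow> inG \<mu> (x + t *\<^sub>R axis i s) \<xi>"
  shows "a$i * s \<le> 0"
proof -
  have "(a,b) \<bullet> (axis i s, 0) \<le> 0"
    by (rule rnorm_dir[OF rn t0]) (use h in \<open>simp add: Gs_def\<close>)
  thus ?thesis by (simp add: inner_axis_real)
qed

lemma rn_dirxi: assumes rn: "(a,b) \<in> regular_normal (Gs \<mu>) (x,\<xi>)" and t0: "t0 > 0"
  and h: "\<And>t. 0 < t \<Longrightarrow> t < t0 \<Longrightarrow> inG \<mu> x (\<xi> + t *\<^sub>R axis i s)"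
  shows "b$i * s \<le> 0"
proof -
  have "(a,b) \<bullet> (0, axis i s) \<le> 0"
    by (rule rnorm_dir[OF rn t0]) (use h in \<open>simp add: Gs_def\<close>)
  thus ?thesis by (simp add: inner_axis_real)
qed

lemma rn_nec: assumes mu: "\<mu> > 0" and G: "inG \<mu> x \<xi>" and rn: "(a,b) \<in> regular_normal (Gs \<mu>) (x,\<xi>)"
  shows "(x$i \<noteq> 0 \<longrightarrow> a$i = 0) \<and> (\<bar>\<xi>$i\<bar> < \<mu> \<longrightarrow> b$i = 0) \<and> a$i * b$i \<le> 0"
proof -
  have Gi: "\<bar>\<xi>$i\<bar> \<le> \<mu>" "x$i > 0 \<Longrightarrow> \<xi>$i = \<mu>" "x$i < 0 \<Longrightarrow> \<xi>$i = -\<mu>" using G by (auto simp: inG_def)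
  have A: "a$i = 0" if xi: "x$i \<noteq> 0"
  proof (cases "x$i > 0")
    case True
    have "a$i * s \<le> 0" if s: "s = 1 \<or> s = -1" for s
    proof (rule rn_dirx[OF rn True])
      fix t assume t: "0 < t" "t < x$i"
      show "inG \<mu> (x + t *\<^sub>R axis i s) \<xi>"
        by (rule inG_upd[OF G]) (use t s Gi True in \<open>auto simp: axis_comp axis_def\<close>)
    qed
    from this[of 1] this[of "-1"] show ?thesis by simp
  next
    case False
    hence neg: "- x$i > 0" using xi by simp
    have "a$i * s \<le> 0" if s: "s = 1 \<or> s = -1" for s
    proof (rule rn_dirx[OF rn neg])
      fix t assume t: "0 < t" "t < - x$i"
      show "inG \<mu> (x + t *\<^sub>R axis i s) \<xi>"
        by (rule inG_upd[OF G]) (use t s Gi False xi in \<open>auto simp: axis_comp axis_def\<close>)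
    qed
    from this[of 1] this[of "-1"] show ?thesis by simp
  qed
  have x0: "x$i = 0" if "\<bar>\<xi>$i\<bar> < \<mu>" using that Gi by (cases "x$i > 0"; cases "x$i < 0") auto
  have B: "b$i = 0" if xi: "\<bar>\<xi>$i\<bar> < \<mu>"
  proof -
    have pos: "\<mu> - \<bar>\<xi>$i\<bar> > 0" using xi by simp
    have "b$i * s \<le> 0" if s: "s = 1 \<or> s = -1" for s
    proof (rule rn_dirxi[OF rn pos])
      fix t assume t: "0 < t" "t < \<mu> - \<bar>\<xi>$i\<bar>"
      show "inG \<mu> x (\<xi> + t *\<^sub>R axis i s)"
        by (rule inG_upd[OF G]) (use t s x0[OF xi] in \<open>auto simp: axis_comp axis_def\<close>)
    qed
    from this[of 1] this[of "-1"] show ?thesis by simp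
  qed
  have C: "a$i * b$i \<le> 0"
  proof (cases "x$i \<noteq> 0 \<or> \<bar>\<xi>$i\<bar> < \<mu>")
    case True thus ?thesis using A B by auto
  next
    case False
    hence x0: "x$i = 0" and xim: "\<xi>$i = \<mu> \<or> \<xi>$i = -\<mu>" using Gi(1) by auto
    have two: "2*\<mu> > 0" using mu by simp
    show ?thesis
    proof (cases "\<xi>$i = \<mu>")
      case True
      have "a$i * 1 \<le> 0"
      proof (rule rn_dirx[OF rn zero_less_one])
        fix t :: real assume t: "0 < t" "t < 1"
        show "inG \<mu> (x + t *\<^sub>R axis i 1) \<xi>"
          by (rule inG_upd[OF G]) (use t x0 True mu in \<open>auto simp: axis_comp axis_def\<close>)
      qed
      moreover have "b$i * (-1) \<le> 0"
      proof (rule rn_dirxi[OF rn two])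
        fix t :: real assume t: "0 < t" "t < 2*\<mu>"
        show "inG \<mu> x (\<xi> + t *\<^sub>R axis i (-1))"
          by (rule inG_upd[OF G]) (use t x0 True mu in \<open>auto simp: axis_comp axis_def\<close>)
      qed
      ultimately show ?thesis by (simp add: mult_nonpos_nonneg)
    next
      case False
      hence T: "\<xi>$i = -\<mu>" using xim by simp
      have "a$i * (-1) \<le> 0"
      proof (rule rn_dirx[OF rn zero_less_one])
        fix t :: real assume t: "0 < t" "t < 1"
        show "inG \<mu> (x + t *\<^sub>R axis i (-1)) \<xi>"
          by (rule inG_upd[OF G]) (use t x0 T mu in \<open>auto simp: axis_comp axis_def\<close>)
      qed
      moreover have "b$i * 1 \<le> 0"
      proof (rule rn_dirxi[OF rn two])
        fix t :: real assume t: "0 < t" "t < 2*\<mu>"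
        show "inG \<mu> x (\<xi> + t *\<^sub>R axis i 1)"
          by (rule inG_upd[OF G]) (use t x0 T mu in \<open>auto simp: axis_comp axis_def\<close>)
      qed
      ultimately show ?thesis by (simp add: mult_nonneg_nonpos)
    qed
  qed
  show ?thesis using A B C by blast
qed


lemma ln_nec: assumes mu: "\<mu> > 0" and ln: "(a,b) \<in> limiting_normal (Gs \<mu>) (x,\<xi>)"
  shows "(x$i \<noteq> 0 \<longrightarrow> a$i = 0) \<and> (\<bar>\<xi>$i\<bar> < \<mu> \<longrightarrow> b$i = 0) \<and> a$i * b$i \<le> 0"
proof -
  obtain zs vs where zsG: "\<forall>k. zs k \<in> Gs \<mu>" and zs: "zs \<longlonglongrightarrow> (x,\<xi>)" and vs: "vs \<longlonglongrightarrow> (a,b)"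
    and rn: "\<forall>k. vs k \<in> regular_normal (Gs \<mu>) (zs k)"
    using ln unfolding limiting_normal_def by blast
  define xk where "xk k = fst (zs k)" for k
  define \<xi>k where "\<xi>k k = snd (zs k)" for k
  define ak where "ak k = fst (vs k)" for k
  define bk where "bk k = snd (vs k)" for k
  have P: "(xk k $ i \<noteq> 0 \<longrightarrow> ak k $ i = 0) \<and> (\<bar>\<xi>k k $ i\<bar> < \<mu> \<longrightarrow> bk k $ i = 0) \<and> ak k $ i * bk k $ i \<le> 0" for k
  proof (rule rn_nec[OF mu])
    show "inG \<mu> (xk k) (\<xi>k k)" using zsG[rule_format, of k] by (auto simp: Gs_def xk_def \<xi>k_def split: prod.splits)
    show "(ak k, bk k) \<in> regular_normal (Gs \<mu>) (xk k, \<xi>k k)" using rn[rule_format, of k] by (simp add: xk_def \<xi>k_def ak_def bk_def)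
  qed
  have tx: "(\<lambda>k. xk k $ i) \<longlonglongrightarrow> x$i" unfolding xk_def using tendsto_fst[OF zs] by (intro tendsto_vec_nth) simp
  have t\<xi>: "(\<lambda>k. \<xi>k k $ i) \<longlonglongrightarrow> \<xi>$i" unfolding \<xi>k_def using tendsto_snd[OF zs] by (intro tendsto_vec_nth) simp
  have ta: "(\<lambda>k. ak k $ i) \<longlonglongrightarrow> a$i" unfolding ak_def using tendsto_fst[OF vs] by (intro tendsto_vec_nth) simp
  have tb: "(\<lambda>k. bk k $ i) \<longlonglongrightarrow> b$i" unfolding bk_def using tendsto_snd[OF vs] by (intro tendsto_vec_nth) simp
  have A: "a$i = 0" if "x$i \<noteq> 0"
  proof -
    have "eventually (\<lambda>k. xk k $ i \<noteq> 0) sequentially" by (rule tendsto_imp_eventually_ne[OF tx that])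
    hence "eventually (\<lambda>k. 0 = ak k $ i) sequentially" by eventually_elim (use P in auto)
    hence "(\<lambda>k. ak k $ i) \<longlonglongrightarrow> 0" by (rule Lim_transform_eventually[OF tendsto_const])
    thus ?thesis using ta LIMSEQ_unique by blast
  qed
  have B: "b$i = 0" if "\<bar>\<xi>$i\<bar> < \<mu>"
  proof -
    have "eventually (\<lambda>k. \<bar>\<xi>k k $ i\<bar> < \<mu>) sequentially" using order_tendstoD(2)[OF tendsto_rabs[OF t\<xi>] that] .
    hence "eventually (\<lambda>k. 0 = bk k $ i) sequentially" by eventually_elim (use P in auto)
    hence "(\<lambda>k. bk k $ i) \<longlonglongrightarrow> 0" by (rule Lim_transform_eventually[OF tendsto_const])
    thus ?thesis using tb LIMSEQ_unique by blast
  qed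
  have C: "a$i * b$i \<le> 0"
    by (rule tendsto_upperbound[OF tendsto_mult[OF ta tb]]) (use P in auto)
  show ?thesis using A B C by blast
qed

lemma rn_suff: assumes mu: "\<mu> > 0" and G: "inG \<mu> x \<xi>"
  and h: "\<And>i. (x$i \<noteq> 0 \<and> a$i = 0) \<or> (\<bar>\<xi>$i\<bar> < \<mu> \<and> b$i = 0)"
  shows "(a,b) \<in> regular_normal (Gs \<mu>) (x,\<xi>)"
proof -
  define ri where "ri i = (if x$i \<noteq> 0 then \<bar>x$i\<bar> else \<mu> - \<bar>\<xi>$i\<bar>)" for i
  define r where "r = Min (range ri)"
  have rip: "ri i > 0" for i using h[of i] by (auto simp: ri_def)
  have r: "r > 0" unfolding r_def by (subst Min_gr_iff) (use rip in auto)
  have rle: "r \<le> ri i" for i unfolding r_def by (rule Min_le) auto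
  have zero: "(a,b) \<bullet> (z - (x,\<xi>)) = 0" if z: "z \<in> Gs \<mu>" "norm (z - (x,\<xi>)) < r" for z
  proof -
    obtain x' \<xi>' where zz: "z = (x',\<xi>')" by (cases z)
    have G': "inG \<mu> x' \<xi>'" using z(1) zz by (simp add: Gs_def)
    have nx: "norm (x' - x) < r" using z(2) zz norm_fst_le[of "x' - x" "\<xi>' - \<xi>"] by simp
    have n\<xi>: "norm (\<xi>' - \<xi>) < r" using z(2) zz norm_snd_le[of "\<xi>' - \<xi>" "x' - x"] by simp
    have term0: "a$i * (x'$i - x$i) + b$i * (\<xi>'$i - \<xi>$i) = 0" for i
    proof -
      have cx: "\<bar>x'$i - x$i\<bar> < ri i" using component_le_norm_cart[of "x' - x" i] nx rle[of i] by simp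
      have c\<xi>: "\<bar>\<xi>'$i - \<xi>$i\<bar> < ri i" using component_le_norm_cart[of "\<xi>' - \<xi>" i] n\<xi> rle[of i] by simp
      have Gi: "\<bar>\<xi>$i\<bar> \<le> \<mu>" "x$i > 0 \<Longrightarrow> \<xi>$i = \<mu>" "x$i < 0 \<Longrightarrow> \<xi>$i = -\<mu>" using G by (auto simp: inG_def)
      have Gi': "\<bar>\<xi>'$i\<bar> \<le> \<mu>" "x'$i > 0 \<Longrightarrow> \<xi>'$i = \<mu>" "x'$i < 0 \<Longrightarrow> \<xi>'$i = -\<mu>" using G' by (auto simp: inG_def)
      show ?thesis
      proof (cases "x$i \<noteq> 0 \<and> a$i = 0")
        case True
        hence "ri i = \<bar>x$i\<bar>" by (simp add: ri_def)
        hence "\<xi>'$i = \<xi>$i" using cx True Gi Gi' by (cases "x$i > 0") auto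
        thus ?thesis using True by simp
      next
        case False
        hence F: "\<bar>\<xi>$i\<bar> < \<mu>" "b$i = 0" using h[of i] by auto
        have x0: "x$i = 0" using F Gi by (cases "x$i > 0"; cases "x$i < 0") auto
        hence "ri i = \<mu> - \<bar>\<xi>$i\<bar>" by (simp add: ri_def)
        hence "\<bar>\<xi>'$i\<bar> < \<mu>" using c\<xi> by linarith
        hence "x'$i = 0" using Gi' by (cases "x'$i > 0"; cases "x'$i < 0") auto
        thus ?thesis using x0 F by simp
      qed
    qed
    have "(a,b) \<bullet> (z - (x,\<xi>)) = (\<Sum>i\<in>UNIV. a$i * (x'$i - x$i) + b$i * (\<xi>'$i - \<xi>$i))"
      using zz by (simp add: inner_sum_cart sum.distrib)
    also have "\<dots> = 0" using term0 by simp
    finally show ?thesis .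
  qed
  show ?thesis unfolding regular_normal_def
  proof (intro CollectI allI impI exI[of _ r] conjI r ballI)
    fix e :: real and z assume e: "e > 0" and z: "z \<in> Gs \<mu>" "norm (z - (x,\<xi>)) < r"
    show "(a,b) \<bullet> (z - (x,\<xi>)) \<le> e * norm (z - (x,\<xi>))" using zero[OF z] e by simp
  qed
qed

lemma scaleR_mv: "((c::real) *\<^sub>R (B::real^'n^'m)) *v x = c *\<^sub>R (B *v x)"
  by (simp add: matrix_vector_mult_def vec_eq_iff sum_distrib_left algebra_simps)

lemma tr_inner: "(transpose (A::real^'n^'m) *v u) \<bullet> y = u \<bullet> (A *v y)"
  by (simp add: dot_lmul_matrix)

lemma Ab_inner: "(lasso_Abar A *v x) \<bullet> y = (A *v x) \<bullet> (A *v y)"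
proof -
  have "lasso_Abar A *v x = transpose A *v (A *v x)" by (simp only: lasso_Abar_def matrix_vector_mul_assoc)
  thus ?thesis by (simp only: tr_inner)
qed

lemma M_mv: "(mat 1 - \<gamma> *\<^sub>R lasso_Abar A) *v x = x - \<gamma> *\<^sub>R (lasso_Abar A *v x)"
  by (simp add: matrix_vector_mult_diff_rdistrib scaleR_mv)

lemma M_inner: "((mat 1 - \<gamma> *\<^sub>R lasso_Abar A) *v x) \<bullet> y = x \<bullet> y - \<gamma> * ((A *v x) \<bullet> (A *v y))"
  by (simp add: M_mv inner_diff_left Ab_inner)

lemma M_sym: "((mat 1 - \<gamma> *\<^sub>R lasso_Abar A) *v x) \<bullet> y = x \<bullet> ((mat 1 - \<gamma> *\<^sub>R lasso_Abar A) *v y)"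
  unfolding M_inner inner_commute[of "(mat 1 - \<gamma> *\<^sub>R lasso_Abar A) *v y" x, symmetric]
  by (simp add: inner_commute)

lemma M_inv: assumes "pos_def (mat 1 - \<gamma> *\<^sub>R lasso_Abar A)"
  shows "(mat 1 - \<gamma> *\<^sub>R lasso_Abar A) ** gdna_Q (lasso_Abar A) \<gamma> = mat 1 \<and>
         gdna_Q (lasso_Abar A) \<gamma> ** (mat 1 - \<gamma> *\<^sub>R lasso_Abar A) = mat 1"
proof -
  let ?M = "mat 1 - \<gamma> *\<^sub>R lasso_Abar A"
  have "\<forall>x. ?M *v x = 0 \<longrightarrow> x = 0"
  proof (intro allI impI)
    fix x assume "?M *v x = 0"
    hence "x \<bullet> (?M *v x) = 0" by simp
    thus "x = 0" using assms unfolding pos_def_def by (metis less_irrefl)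
  qed
  hence "\<exists>B. B ** ?M = mat 1" using matrix_left_invertible_ker by blast
  hence inv: "invertible ?M" using invertible_left_inverse by blast
  show ?thesis unfolding gdna_Q_def matrix_inv_def
    by (rule someI_ex) (use inv in \<open>simp add: invertible_def\<close>)
qed


lemma MQ: assumes pd: "pos_def (mat 1 - \<gamma> *\<^sub>R lasso_Abar A)"
  shows "(mat 1 - \<gamma> *\<^sub>R lasso_Abar A) *v (gdna_Q (lasso_Abar A) \<gamma> *v x) = x"
    "gdna_Q (lasso_Abar A) \<gamma> *v ((mat 1 - \<gamma> *\<^sub>R lasso_Abar A) *v x) = x"
  using M_inv[OF pd] by (simp_all add: matrix_vector_mul_assoc)

lemma Q_sym: assumes pd: "pos_def (mat 1 - \<gamma> *\<^sub>R lasso_Abar A)"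
  shows "(gdna_Q (lasso_Abar A) \<gamma> *v x) \<bullet> y = x \<bullet> (gdna_Q (lasso_Abar A) \<gamma> *v y)"
proof -
  let ?M = "mat 1 - \<gamma> *\<^sub>R lasso_Abar A" and ?Q = "gdna_Q (lasso_Abar A) \<gamma>"
  have "(?Q *v x) \<bullet> y = (?Q *v x) \<bullet> (?M *v (?Q *v y))" by (simp add: MQ[OF pd])
  also have "\<dots> = (?M *v (?Q *v x)) \<bullet> (?Q *v y)" by (simp add: M_sym)
  also have "\<dots> = x \<bullet> (?Q *v y)" by (simp add: MQ[OF pd])
  finally show ?thesis .
qed

lemma P_mv: "gdna_P B \<gamma> *v x = gdna_Q B \<gamma> *v x - x"
  by (simp add: gdna_P_def matrix_vector_mult_diff_rdistrib)

lemma P_sym: assumes pd: "pos_def (mat 1 - \<gamma> *\<^sub>R lasso_Abar A)"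
  shows "(gdna_P (lasso_Abar A) \<gamma> *v x) \<bullet> y = x \<bullet> (gdna_P (lasso_Abar A) \<gamma> *v y)"
  by (simp add: P_mv inner_diff_left inner_diff_right Q_sym[OF pd])

lemma inner_sq_diff: "(a - c *\<^sub>R b) \<bullet> (a - c *\<^sub>R b) = a \<bullet> a - 2*c*(a \<bullet> b) + c*c*(b \<bullet> b)"
  for a b :: "'a::real_inner"
proof -
  have "(a - c *\<^sub>R b) \<bullet> (a - c *\<^sub>R b) = a \<bullet> a - c*(a \<bullet> b) - c*(b \<bullet> a) + c*c*(b \<bullet> b)"
    by (simp add: inner_diff_left inner_diff_right algebra_simps)
  thus ?thesis by (simp add: inner_commute[of b a])
qed

lemma inner_diff_sc: "a \<bullet> (a - c *\<^sub>R b) = a \<bullet> a - c*(a \<bullet> b)" for a b :: "'a::real_inner"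
  by (simp add: inner_diff_right)

lemma P_pos: assumes pA: "pos_def (transpose A ** A)" and pd: "pos_def (mat 1 - \<gamma> *\<^sub>R lasso_Abar A)"
  and g: "\<gamma> > 0" and x: "x \<noteq> 0"
  shows "(gdna_P (lasso_Abar A) \<gamma> *v x) \<bullet> x > 0"
proof -
  let ?M = "mat 1 - \<gamma> *\<^sub>R lasso_Abar A" and ?Q = "gdna_Q (lasso_Abar A) \<gamma>" and ?Ab = "lasso_Abar A"
  define v where "v = ?Q *v x"
  have Mv: "?M *v v = x" by (simp add: v_def MQ[OF pd])
  have v0: "v \<noteq> 0" using Mv x by auto
  define z where "z = ?Ab *v v"
  have Mv': "x = v - \<gamma> *\<^sub>R z" using Mv by (simp add: M_mv z_def)
  define q where "q = v \<bullet> z"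
  define r where "r = z \<bullet> z"
  define s where "s = (A *v z) \<bullet> (A *v z)"
  have q: "q = (A *v v) \<bullet> (A *v v)" unfolding q_def z_def by (subst inner_commute) (rule Ab_inner)
  have qpos: "q > 0" using pA v0 unfolding pos_def_def q_def z_def lasso_Abar_def by (simp add: inner_commute)
  hence z0: "z \<noteq> 0" unfolding q_def by auto
  have "z \<bullet> (?M *v z) > 0" using pd z0 unfolding pos_def_def by blast
  hence "(?M *v z) \<bullet> z > 0" by (metis inner_commute)
  hence rs: "r - \<gamma> * s > 0" by (simp add: M_inner r_def s_def)
  have Avz: "(A *v v) \<bullet> (A *v z) = r" by (simp add: r_def z_def Ab_inner[symmetric])
  have Ad: "A *v (v - \<gamma> *\<^sub>R z) = A *v v - \<gamma> *\<^sub>R (A *v z)"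
    by (simp add: matrix_vector_mult_diff_distrib matrix_vector_mult_scaleR)
  have "0 \<le> (A *v (v - \<gamma> *\<^sub>R z)) \<bullet> (A *v (v - \<gamma> *\<^sub>R z))" by simp
  also have "\<dots> = q - 2*\<gamma>*r + \<gamma>*\<gamma> * s"
    unfolding Ad inner_sq_diff q s_def Avz ..
  finally have q1: "q \<ge> 2*\<gamma>*r - \<gamma>*\<gamma> * s" by simp
  have "\<gamma> * (\<gamma> * s) < \<gamma> * r" using rs g by (intro mult_strict_left_mono) auto
  hence qr: "q - \<gamma>*r > 0" using q1 by (simp add: mult.assoc)
  have "(gdna_P ?Ab \<gamma> *v x) \<bullet> x = (?Q *v x) \<bullet> x - x \<bullet> x" by (simp add: P_mv inner_diff_left)
  also have "\<dots> = v \<bullet> (v - \<gamma> *\<^sub>R z) - (v - \<gamma> *\<^sub>R z) \<bullet> (v - \<gamma> *\<^sub>R z)" by (simp add: v_def[symmetric] Mv'[symmetric])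
  also have "\<dots> = \<gamma> * (q - \<gamma>*r)"
    unfolding inner_sq_diff inner_diff_sc q_def[symmetric] r_def[symmetric] by (simp add: algebra_simps)
  finally show ?thesis using qr g by simp
qed

lemma quad_lower: fixes B :: "real^'n^'n"
  assumes pos: "\<And>x. x \<noteq> 0 \<Longrightarrow> (B *v x) \<bullet> x > 0"
  shows "\<exists>l>0. \<forall>x. l * (norm x)\<^sup>2 \<le> (B *v x) \<bullet> x"
proof -
  let ?f = "\<lambda>x. (B *v x) \<bullet> x"
  have ne: "sphere (0::real^'n) 1 \<noteq> {}"
    using norm_axis_1[of undefined] by (metis mem_sphere_0 empty_iff)
  have cont: "continuous_on (sphere 0 1) ?f"
    by (intro continuous_intros bounded_linear.continuous_on[OF matrix_vector_mul_bounded_linear] continuous_on_id)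
  obtain x0 where x0: "x0 \<in> sphere 0 1" "\<forall>y\<in>sphere 0 1. ?f x0 \<le> ?f y"
    using continuous_attains_inf[OF compact_sphere ne cont] by blast
  have x00: "x0 \<noteq> 0" using x0(1) by auto
  show ?thesis
  proof (intro exI[of _ "?f x0"] conjI allI)
    show "?f x0 > 0" using pos[OF x00] .
    fix x
    show "?f x0 * (norm x)\<^sup>2 \<le> ?f x"
    proof (cases "x = 0")
      case True thus ?thesis by simp
    next
      case False
      hence nx: "norm x > 0" by simp
      let ?u = "(1 / norm x) *\<^sub>R x"
      have "?u \<in> sphere 0 1" using nx by simp
      hence "?f x0 \<le> ?f ?u" using x0(2) by blast
      also have "?f ?u = ?f x / (norm x)\<^sup>2"
        by (simp add: matrix_vector_mult_scaleR power2_eq_square)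
      finally show ?thesis using nx by (simp add: le_divide_eq)
    qed
  qed
qed

locale lsetup =
  fixes A :: "real^'n^'m" and b :: "real^'m" and \<mu> \<gamma> :: real
  assumes mu: "\<mu> > 0" and g: "\<gamma> > 0" and pd: "pos_def (mat 1 - \<gamma> *\<^sub>R lasso_Abar A)"
    and pA: "pos_def (transpose A ** A)"
begin

abbreviation "Q \<equiv> gdna_Q (lasso_Abar A) \<gamma>"
abbreviation "P \<equiv> gdna_P (lasso_Abar A) \<gamma>"
abbreviation "cc \<equiv> gdna_c (lasso_Abar A) (lasso_bbar A b) \<gamma>"
abbreviation "F \<equiv> gdna_grad (lasso_Abar A) (lasso_bbar A b) (lasso_g \<mu>) \<gamma>"
abbreviation "psi \<equiv> gdna_psi (lasso_Abar A) (lasso_bbar A b) (lasso_g \<mu>) \<gamma>"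
abbreviation "\<theta> \<equiv> \<gamma> * \<mu>"
abbreviation "S \<equiv> Svec (\<gamma> * \<mu>)"

lemma th: "\<theta> > 0" using mu g by simp

lemma F_eq: "F y = Q *v y - S y + cc"
  by (simp add: gdna_grad_def prox_eq[OF mu g])

lemma F_eq2: "F y = P *v y + (y - S y) + cc"
  by (simp add: F_eq P_mv algebra_simps)

lemma psi_eq: "psi y = 1/2 * ((P *v y) \<bullet> y) + cc \<bullet> y + (\<Sum>i\<in>UNIV. Hf \<theta> (y$i))"
  by (simp add: gdna_psi_def moreau_Hf[OF mu g])

lemma Psym: "(P *v x) \<bullet> y = x \<bullet> (P *v y)"
  by (rule P_sym[OF pd])

lemma Psym': "(P *v x) \<bullet> y = (P *v y) \<bullet> x"
  by (metis Psym inner_commute)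

lemma Ppos: "x \<noteq> 0 \<Longrightarrow> (P *v x) \<bullet> x > 0"
  by (rule P_pos[OF pA pd g])

lemma Qw: "Q *v w = P *v w + w" by (simp add: P_mv)

lemma P_quad: "(P *v (y + w)) \<bullet> (y + w) = (P *v y) \<bullet> y + 2 * ((P *v y) \<bullet> w) + (P *v w) \<bullet> w"
proof -
  have "(P *v (y + w)) \<bullet> (y + w) = (P *v y) \<bullet> y + (P *v y) \<bullet> w + (P *v w) \<bullet> y + (P *v w) \<bullet> w"
    by (simp add: matrix_vector_right_distrib inner_add_left inner_add_right)
  also have "(P *v w) \<bullet> y = (P *v y) \<bullet> w" by (rule Psym')
  finally show ?thesis by simp
qed

lemma Hsum_upper: "(\<Sum>i\<in>UNIV. Hf \<theta> ((y + w)$i)) \<le> (\<Sum>i\<in>UNIV. Hf \<theta> (y$i)) + (y - S y) \<bullet> w + (w \<bullet> w) / 2"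
proof -
  have "(\<Sum>i\<in>UNIV. Hf \<theta> ((y + w)$i)) \<le> (\<Sum>i\<in>UNIV. Hf \<theta> (y$i) + (y$i - soft \<theta> (y$i)) * w$i + (w$i)\<^sup>2 / 2)"
    by (rule sum_mono) (simp add: Hf_upper[OF th])
  also have "\<dots> = (\<Sum>i\<in>UNIV. Hf \<theta> (y$i)) + (y - S y) \<bullet> w + (w \<bullet> w) / 2"
    by (simp add: sum.distrib inner_sum_cart sum_divide_distrib power2_eq_square)
  finally show ?thesis .
qed

lemma psi_upper: "psi (y + w) \<le> psi y + F y \<bullet> w + 1/2 * ((Q *v w) \<bullet> w)"
proof -
  have "psi (y + w) = 1/2 * ((P *v (y + w)) \<bullet> (y + w)) + cc \<bullet> (y + w) + (\<Sum>i\<in>UNIV. Hf \<theta> ((y + w)$i))"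
    by (rule psi_eq)
  also have "\<dots> \<le> 1/2 * ((P *v (y + w)) \<bullet> (y + w)) + cc \<bullet> (y + w) + ((\<Sum>i\<in>UNIV. Hf \<theta> (y$i)) + (y - S y) \<bullet> w + (w \<bullet> w) / 2)"
    using Hsum_upper by simp
  also have "\<dots> = psi y + F y \<bullet> w + 1/2 * ((Q *v w) \<bullet> w)"
    unfolding psi_eq F_eq2 Qw P_quad by (simp add: inner_add_left inner_add_right algebra_simps)
  finally show ?thesis .
qed


lemma psi_trap: assumes nr: "\<And>i. near1 \<theta> (y$i) (yb$i)"
  shows "psi y - psi yb = 1/2 * ((F y + F yb) \<bullet> (y - yb))"
proof -
  have H: "(\<Sum>i\<in>UNIV. Hf \<theta> (y$i)) - (\<Sum>i\<in>UNIV. Hf \<theta> (yb$i)) = 1/2 * (((y - S y) + (yb - S yb)) \<bullet> (y - yb))"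
  proof -
    have "(\<Sum>i\<in>UNIV. Hf \<theta> (y$i)) - (\<Sum>i\<in>UNIV. Hf \<theta> (yb$i)) = (\<Sum>i\<in>UNIV. Hf \<theta> (y$i) - Hf \<theta> (yb$i))"
      by (simp add: sum_subtractf)
    also have "\<dots> = (\<Sum>i\<in>UNIV. ((y$i - soft \<theta> (y$i)) + (yb$i - soft \<theta> (yb$i))) * (y$i - yb$i) / 2)"
      by (rule sum.cong) (simp_all add: Hf_trap[OF th nr])
    also have "\<dots> = 1/2 * (((y - S y) + (yb - S yb)) \<bullet> (y - yb))"
      by (simp add: inner_sum_cart sum_divide_distrib)
    finally show ?thesis .
  qed
  have Pq: "(P *v y) \<bullet> y - (P *v yb) \<bullet> yb = (P *v y + P *v yb) \<bullet> (y - yb)"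
  proof -
    have "(P *v yb) \<bullet> y = (P *v y) \<bullet> yb" by (rule Psym')
    thus ?thesis by (simp add: inner_add_left inner_diff_right)
  qed
  have "psi y - psi yb = 1/2 * ((P *v y) \<bullet> y - (P *v yb) \<bullet> yb) + cc \<bullet> (y - yb)
      + ((\<Sum>i\<in>UNIV. Hf \<theta> (y$i)) - (\<Sum>i\<in>UNIV. Hf \<theta> (yb$i)))"
    by (simp add: psi_eq inner_diff_right algebra_simps)
  also have "\<dots> = 1/2 * ((F y + F yb) \<bullet> (y - yb))"
  proof -
    have Fs: "F y + F yb = (P *v y + P *v yb) + ((y - S y) + (yb - S yb)) + (cc + cc)"
      by (simp add: F_eq2 algebra_simps)
    have "(F y + F yb) \<bullet> (y - yb) = (P *v y + P *v yb) \<bullet> (y - yb) + ((y - S y) + (yb - S yb)) \<bullet> (y - yb) + 2 * (cc \<bullet> (y - yb))"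
      unfolding Fs inner_add_left by simp
    thus ?thesis unfolding H Pq by simp
  qed
  finally show ?thesis .
qed

lemma soft_mono1: "(p - q - (soft \<theta> p - soft \<theta> q)) * (p - q) \<ge> 0"
proof -
  have "\<bar>soft \<theta> p - soft \<theta> q\<bar> \<le> \<bar>p - q\<bar>" by (rule soft_lip[OF th])
  have "(soft \<theta> p - soft \<theta> q) * (p - q) \<le> \<bar>soft \<theta> p - soft \<theta> q\<bar> * \<bar>p - q\<bar>" by (metis abs_ge_self abs_mult)
  also have "\<dots> \<le> \<bar>p - q\<bar> * \<bar>p - q\<bar>" by (rule mult_right_mono) (use \<open>\<bar>soft \<theta> p - soft \<theta> q\<bar> \<le> \<bar>p - q\<bar>\<close> in simp_all)
  also have "\<dots> = (p - q) * (p - q)" by (rule abs_mult_self_eq)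
  finally have "(soft \<theta> p - soft \<theta> q) * (p - q) \<le> (p - q) * (p - q)" .
  thus ?thesis by (simp add: algebra_simps)
qed

lemma F_mono: "(F y - F z) \<bullet> (y - z) \<ge> (P *v (y - z)) \<bullet> (y - z)"
proof -
  have "F y - F z = P *v (y - z) + ((y - z) - (S y - S z))"
    by (simp add: F_eq2 matrix_vector_mult_diff_distrib algebra_simps)
  moreover have "((y - z) - (S y - S z)) \<bullet> (y - z) \<ge> 0"
    unfolding inner_sum_cart by (rule sum_nonneg) (use soft_mono1 in simp)
  ultimately show ?thesis by (simp add: inner_add_left)
qed

lemma S_lip: "norm (S y - S z) \<le> norm (y - z)"
proof -
  have "(norm (S y - S z))\<^sup>2 \<le> (norm (y - z))\<^sup>2"
    unfolding norm_sq_cart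
  proof (rule sum_mono)
    fix i
    have "\<bar>soft \<theta> (y$i) - soft \<theta> (z$i)\<bar> \<le> \<bar>y$i - z$i\<bar>" by (rule soft_lip[OF th])
    hence "\<bar>soft \<theta> (y$i) - soft \<theta> (z$i)\<bar>\<^sup>2 \<le> \<bar>y$i - z$i\<bar>\<^sup>2" by (rule power_mono) simp
    thus "((S y - S z) $ i)\<^sup>2 \<le> ((y - z) $ i)\<^sup>2" by simp
  qed
  thus ?thesis by (rule power2_le_imp_le) simp
qed

definition lam :: real where "lam = (SOME l. l > 0 \<and> (\<forall>x. l * (norm x)\<^sup>2 \<le> (P *v x) \<bullet> x))"

lemma lam: "lam > 0" "lam * (norm x)\<^sup>2 \<le> (P *v x) \<bullet> x"
proof -
  have "\<exists>l>0. \<forall>x. l * (norm x)\<^sup>2 \<le> (P *v x) \<bullet> x" by (rule quad_lower) (rule Ppos)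
  hence "lam > 0 \<and> (\<forall>x. lam * (norm x)\<^sup>2 \<le> (P *v x) \<bullet> x)" unfolding lam_def by (rule someI_ex[where P="\<lambda>l. l > 0 \<and> (\<forall>x. l * (norm x)\<^sup>2 \<le> (P *v x) \<bullet> x)"])  
  thus "lam > 0" "lam * (norm x)\<^sup>2 \<le> (P *v x) \<bullet> x" by auto
qed

definition KK :: real where "KK = (SOME K. K > 0 \<and> (\<forall>x. norm (Q *v x) \<le> norm x * K))"

lemma KK: "KK > 0" "norm (Q *v x) \<le> norm x * KK"
proof -
  have "\<exists>K>0. \<forall>x. norm (Q *v x) \<le> norm x * K"
    by (rule bounded_linear.pos_bounded[OF matrix_vector_mul_bounded_linear])
  hence "KK > 0 \<and> (\<forall>x. norm (Q *v x) \<le> norm x * KK)" unfolding KK_def by (rule someI_ex[where P="\<lambda>K. K > 0 \<and> (\<forall>x. norm (Q *v x) \<le> norm x * K)"])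
  thus "KK > 0" "norm (Q *v x) \<le> norm x * KK" by auto
qed

lemma Q_quad_le: "(Q *v w) \<bullet> w \<le> KK * (norm w)\<^sup>2"
proof -
  have "(Q *v w) \<bullet> w \<le> norm (Q *v w) * norm w" by (rule norm_cauchy_schwarz)
  also have "\<dots> \<le> norm w * KK * norm w" by (rule mult_right_mono[OF KK(2)]) simp
  finally show ?thesis by (simp add: power2_eq_square algebra_simps)
qed

lemma F_strong: "(F y - F z) \<bullet> (y - z) \<ge> lam * (norm (y - z))\<^sup>2"
  using F_mono[of y z] lam(2)[of "y - z"] by linarith

lemma F_dist: "lam * norm (y - z) \<le> norm (F y - F z)"
proof (cases "y = z")
  case True thus ?thesis by simp
next
  case False
  hence n: "norm (y - z) > 0" by simp
  have "lam * (norm (y - z))\<^sup>2 \<le> norm (F y - F z) * norm (y - z)"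
    using F_strong[of y z] norm_cauchy_schwarz[of "F y - F z" "y - z"] by linarith
  thus ?thesis using n by (simp add: power2_eq_square mult.assoc[symmetric] mult_le_cancel_right)
qed

lemma psi_lower: "psi y \<ge> - (norm cc)\<^sup>2 / (2 * lam)"
proof -
  have H: "(\<Sum>i\<in>UNIV. Hf \<theta> (y$i)) \<ge> 0" by (rule sum_nonneg) (simp add: Hf_nonneg[OF th])
  have c: "cc \<bullet> y \<ge> - (norm cc * norm y)" using norm_cauchy_schwarz[of "-cc" y] by simp
  have sq: "lam/2 * (norm y)\<^sup>2 - norm cc * norm y \<ge> - (norm cc)\<^sup>2 / (2 * lam)"
  proof -
    have "0 \<le> (lam * norm y - norm cc)\<^sup>2 / (2 * lam)" using lam(1) by simp
    also have "\<dots> = lam/2 * (norm y)\<^sup>2 - norm cc * norm y + (norm cc)\<^sup>2 / (2 * lam)"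
      using lam(1) by (simp add: power2_eq_square field_simps)
    finally show ?thesis by simp
  qed
  have "psi y \<ge> 1/2 * (lam * (norm y)\<^sup>2) + cc \<bullet> y"
    using psi_eq[of y] H lam(2)[of y] by simp
  thus ?thesis using c sq by simp
qed

end

lemma aux_sign: assumes "(p::real)/g * (-q) \<le> 0" "g > 0" shows "p*q \<ge> 0"
proof -
  have "p/g * (-q) = - ((p*q)/g)" by simp
  hence "(p*q)/g \<ge> 0" using assms(1) by linarith
  thus ?thesis using assms(2) by (simp add: zero_le_divide_iff)
qed

context lsetup
begin

abbreviation "gdir \<equiv> gdna_dir (lasso_Abar A) (lasso_bbar A b) (lasso_g \<mu>) \<gamma>"

lemma dir_iff: "gdir y d \<longleftrightarrow>
  ((1/\<gamma>) *\<^sub>R (- F y - P *v d), - (Q *v d + F y)) \<in> limiting_normal (Gs \<mu>) (S y, (1/\<gamma>) *\<^sub>R (y - S y))"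
  by (simp add: gdna_dir_def second_subdiff_def prox_eq[OF mu g] graph_eq[OF mu] Let_def)

lemma dir_nec: assumes dd: "gdir y d"
  shows "(d$i - (Q *v d + F y)$i) * (Q *v d + F y)$i \<ge> 0 \<and>
         (\<bar>y$i\<bar> > \<theta> \<longrightarrow> d$i = (Q *v d + F y)$i) \<and> (\<bar>y$i\<bar> < \<theta> \<longrightarrow> (Q *v d + F y)$i = 0)"
proof -
  let ?u = "Q *v d + F y"
  have L: "((1/\<gamma>) *\<^sub>R (- F y - P *v d), - ?u) \<in> limiting_normal (Gs \<mu>) (S y, (1/\<gamma>) *\<^sub>R (y - S y))"
    using dd dir_iff by blast
  have au: "- F y - P *v d = d - ?u" by (simp add: Qw algebra_simps)
  have r1: "((1/\<gamma>) *\<^sub>R (- F y - P *v d))$i = (d$i - ?u$i)/\<gamma>" by (simp add: au)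
  have r2: "(- ?u)$i = - (?u$i)" by simp
  have r3: "((1/\<gamma>) *\<^sub>R (y - S y))$i = (y$i - soft \<theta> (y$i))/\<gamma>" by simp
  have r0: "S y $ i = soft \<theta> (y$i)" by simp
  have c: "(soft \<theta> (y$i) \<noteq> 0 \<longrightarrow> (d$i - ?u$i)/\<gamma> = 0) \<and> (\<bar>(y$i - soft \<theta> (y$i))/\<gamma>\<bar> < \<mu> \<longrightarrow> - (?u$i) = 0)
        \<and> (d$i - ?u$i)/\<gamma> * (- (?u$i)) \<le> 0"
    using ln_nec[OF mu L, of i] unfolding r0 r1 r2 r3 .
  have e1: "soft \<theta> (y$i) \<noteq> 0 \<longleftrightarrow> \<bar>y$i\<bar> > \<theta>" by (rule soft_props(1)[OF th])
  have e2: "\<bar>(y$i - soft \<theta> (y$i))/\<gamma>\<bar> < \<mu> \<longleftrightarrow> \<bar>y$i\<bar> < \<theta>"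
  proof -
    have "\<bar>(y$i - soft \<theta> (y$i))/\<gamma>\<bar> < \<mu> \<longleftrightarrow> \<bar>y$i - soft \<theta> (y$i)\<bar> < \<theta>"
      using g by (simp add: abs_divide pos_divide_less_eq mult.commute)
    thus ?thesis using soft_props(2)[OF th] by simp
  qed
  have e3: "(d$i - ?u$i) * ?u$i \<ge> 0"
  proof -
    have "(d$i - ?u$i)/\<gamma> * (- (?u$i)) \<le> 0" using c by blast
    thus ?thesis using g by (rule aux_sign)
  qed
  show ?thesis using c e1 e2 e3 g by auto
qed

lemma dir_desc: assumes dd: "gdir y d"
  shows "F y \<bullet> d \<le> - ((P *v d) \<bullet> d)" "norm (F y) \<le> (1 + KK) * norm d"
proof -
  let ?u = "Q *v d + F y"
  have ci: "(d$i - ?u$i) * ?u$i \<ge> 0" for i using dir_nec[OF dd, of i] by blast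
  have ud: "?u$i * d$i \<le> d$i * d$i" for i
  proof -
    have "d$i * d$i - ?u$i * d$i = (d$i - ?u$i) * (d$i - ?u$i) + (d$i - ?u$i) * ?u$i" by (simp add: algebra_simps)
    moreover have "(d$i - ?u$i) * (d$i - ?u$i) \<ge> 0" by simp
    ultimately show ?thesis using ci[of i] by linarith
  qed
  have uu: "?u$i * ?u$i \<le> d$i * d$i" for i
  proof -
    have "?u$i * ?u$i \<le> ?u$i * d$i" using ci[of i] by (simp add: algebra_simps)
    thus ?thesis using ud[of i] by linarith
  qed
  have "?u \<bullet> d \<le> d \<bullet> d" unfolding inner_sum_cart by (rule sum_mono) (rule ud)
  moreover have "F y \<bullet> d = ?u \<bullet> d - (P *v d) \<bullet> d - d \<bullet> d" by (simp add: Qw inner_add_left)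
  ultimately show "F y \<bullet> d \<le> - ((P *v d) \<bullet> d)" by linarith
  have "(norm ?u)\<^sup>2 \<le> (norm d)\<^sup>2" unfolding norm_sq_cart by (rule sum_mono) (use uu in \<open>simp add: power2_eq_square\<close>)
  hence nu: "norm ?u \<le> norm d" by (rule power2_le_imp_le) simp
  have "F y = ?u - Q *v d" by simp
  hence "norm (F y) \<le> norm ?u + norm (Q *v d)" by (metis norm_triangle_ineq4)
  also have "\<dots> \<le> norm d + norm d * KK" using nu KK(2)[of d] by linarith
  finally show "norm (F y) \<le> (1 + KK) * norm d" by (simp add: algebra_simps)
qed


lemma xi_lt: "\<bar>(t - soft \<theta> t)/\<gamma>\<bar> < \<mu> \<longleftrightarrow> \<bar>t\<bar> < \<theta>"
proof -
  have "\<bar>(t - soft \<theta> t)/\<gamma>\<bar> < \<mu> \<longleftrightarrow> \<bar>t - soft \<theta> t\<bar> < \<theta>"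
    using g by (simp add: abs_divide pos_divide_less_eq mult.commute)
  thus ?thesis using soft_props(2)[OF th] by simp
qed

lemma xi_le: "\<bar>(t - soft \<theta> t)/\<gamma>\<bar> \<le> \<mu>"
proof -
  have "\<bar>t - soft \<theta> t\<bar> \<le> \<theta>" by (rule soft_props(3)[OF th])
  thus ?thesis using g by (simp add: abs_divide pos_divide_le_eq mult.commute)
qed

definition sig :: "real^'n \<Rightarrow> real^'n" where
  "sig y = (\<chi> i. if \<bar>y$i\<bar> = \<theta> then sgn (y$i) else 0)"

lemma corner_inG: assumes t: "t > 0"
  shows "inG \<mu> (S y + t *\<^sub>R sig y) ((1/\<gamma>) *\<^sub>R (y - S y))"
  unfolding inG_def
proof (intro allI conjI impI)
  fix i
  let ?x = "(S y + t *\<^sub>R sig y) $ i" and ?xi = "((1/\<gamma>) *\<^sub>R (y - S y)) $ i"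
  have xi: "?xi = (y$i - soft \<theta> (y$i))/\<gamma>" by simp
  show "\<bar>?xi\<bar> \<le> \<mu>" unfolding xi by (rule xi_le)
  have gm: "\<theta>/\<gamma> = \<mu>" using g by simp
  have x: "?x = soft \<theta> (y$i) + t * (if \<bar>y$i\<bar> = \<theta> then sgn (y$i) else 0)" by (simp add: sig_def)
  {
    assume pos: "?x > 0"
    show "?xi = \<mu>"
    proof (cases "\<bar>y$i\<bar> = \<theta>")
      case True
      hence s0: "soft \<theta> (y$i) = 0" using soft_props(6)[OF th] by simp
      hence "sgn (y$i) > 0" using pos True x t by (simp add: zero_less_mult_iff)
      hence "y$i = \<theta>" using True by (auto simp: sgn_if split: if_splits)
      thus ?thesis unfolding xi using s0 gm by simp
    next
      case False
      have "sig y $ i = 0" using False by (simp add: sig_def)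
      hence "soft \<theta> (y$i) > 0" using pos by simp
      hence "y$i - soft \<theta> (y$i) = \<theta>" by (rule soft_props(4)[OF th])
      thus ?thesis unfolding xi using gm by simp
    qed
  }
  {
    assume neg: "?x < 0"
    show "?xi = -\<mu>"
    proof (cases "\<bar>y$i\<bar> = \<theta>")
      case True
      hence s0: "soft \<theta> (y$i) = 0" using soft_props(6)[OF th] by simp
      hence "sgn (y$i) < 0" using neg True x t by (simp add: mult_less_0_iff)
      hence "y$i = -\<theta>" using True by (auto simp: sgn_if split: if_splits)
      thus ?thesis unfolding xi using s0 gm by simp
    next
      case False
      have "sig y $ i = 0" using False by (simp add: sig_def)
      hence "soft \<theta> (y$i) < 0" using neg by simp
      hence "y$i - soft \<theta> (y$i) = -\<theta>" by (rule soft_props(5)[OF th])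
      thus ?thesis unfolding xi using gm by simp
    qed
  }
qed

lemma corner_ne: assumes t: "t > 0" and yi: "\<not> \<bar>y$i\<bar> < \<theta>"
  shows "(S y + t *\<^sub>R sig y) $ i \<noteq> 0"
proof (cases "\<bar>y$i\<bar> = \<theta>")
  case True
  hence "soft \<theta> (y$i) = 0" using soft_props(6)[OF th] by simp
  moreover have "sgn (y$i) \<noteq> 0" using True th by (auto simp: sgn_if)
  ultimately show ?thesis using True t by (simp add: sig_def)
next
  case False
  hence "\<bar>y$i\<bar> > \<theta>" using yi by simp
  hence "soft \<theta> (y$i) \<noteq> 0" using soft_props(1)[OF th] by simp
  thus ?thesis using False by (simp add: sig_def)
qed

lemma dir_exists: "\<exists>d. gdir y d"
proof -
  define D :: "real^'n^'n" where "D = (\<chi> i j. if i = j \<and> \<bar>y$i\<bar> < \<theta> then 1 else 0)"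
  define N where "N = P + D"
  have Dv: "(D *v x) $ i = (if \<bar>y$i\<bar> < \<theta> then x$i else 0)" for x i
  proof -
    have "(D *v x) $ i = (\<Sum>j\<in>UNIV. (if i = j \<and> \<bar>y$i\<bar> < \<theta> then 1 else 0) * x$j)"
      by (simp add: matrix_vector_mult_def D_def)
    also have "\<dots> = (\<Sum>j\<in>UNIV. if j = i then (if \<bar>y$i\<bar> < \<theta> then x$i else 0) else 0)"
      by (rule sum.cong) auto
    also have "\<dots> = (if \<bar>y$i\<bar> < \<theta> then x$i else 0)" by simp
    finally show ?thesis .
  qed
  have "\<forall>x. N *v x = 0 \<longrightarrow> x = 0"
  proof (intro allI impI)
    fix x assume Nx: "N *v x = 0"
    have "(D *v x) \<bullet> x \<ge> 0" unfolding inner_sum_cart by (rule sum_nonneg) (simp add: Dv)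
    moreover have "(N *v x) \<bullet> x = (P *v x) \<bullet> x + (D *v x) \<bullet> x"
      by (simp add: N_def matrix_vector_mult_add_rdistrib inner_add_left)
    ultimately have "(P *v x) \<bullet> x \<le> 0" using Nx by simp
    thus "x = 0" using Ppos[of x] by (cases "x = 0") auto
  qed
  then obtain B where "B ** N = mat 1" using matrix_left_invertible_ker by blast
  hence NB: "N ** B = mat 1" using matrix_left_right_inverse by blast
  define d where "d = B *v (- F y)"
  have Nd: "N *v d = - F y" by (simp add: d_def matrix_vector_mul_assoc NB)
  let ?u = "Q *v d + F y"
  let ?a = "(1/\<gamma>) *\<^sub>R (- F y - P *v d)"
  have comp: "(P *v d)$i + (if \<bar>y$i\<bar> < \<theta> then d$i else 0) = - F y $ i" for i
  proof -
    have "(N *v d)$i = (P *v d)$i + (D *v d)$i" by (simp add: N_def matrix_vector_mult_add_rdistrib)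
    thus ?thesis using Nd Dv[of d i] by simp
  qed
  have aJ: "?a$i = 0" if "\<not> \<bar>y$i\<bar> < \<theta>" for i using comp[of i] that by simp
  have uJ: "?u$i = 0" if "\<bar>y$i\<bar> < \<theta>" for i using comp[of i] that by (simp add: Qw)
  define zs where "zs k = (S y + inverse (real (Suc k)) *\<^sub>R sig y, (1/\<gamma>) *\<^sub>R (y - S y))" for k
  have m1: "zs k \<in> Gs \<mu>" for k
  proof -
    have tk: "inverse (real (Suc k)) > 0" by simp
    show ?thesis using corner_inG[OF tk, of y] by (simp add: zs_def Gs_def)
  qed
  have m2: "(?a, - ?u) \<in> regular_normal (Gs \<mu>) (zs k)" for k
  proof -
    have tk: "inverse (real (Suc k)) > 0" by simp
    show ?thesis unfolding zs_def
    proof (rule rn_suff[OF mu corner_inG[OF tk]])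
      fix i
      show "((S y + inverse (real (Suc k)) *\<^sub>R sig y) $ i \<noteq> 0 \<and> ?a $ i = 0) \<or>
            (\<bar>((1/\<gamma>) *\<^sub>R (y - S y)) $ i\<bar> < \<mu> \<and> (- ?u) $ i = 0)"
      proof (cases "\<bar>y$i\<bar> < \<theta>")
        case True
        hence "\<bar>((1/\<gamma>) *\<^sub>R (y - S y)) $ i\<bar> < \<mu>" using xi_lt[of "y$i"] by simp
        thus ?thesis using uJ[OF True] by simp
      next
        case False
        thus ?thesis using corner_ne[OF tk False] aJ[OF False] by simp
      qed
    qed
  qed
  have m3: "zs \<longlonglongrightarrow> (S y, (1/\<gamma>) *\<^sub>R (y - S y))"
  proof -
    have "(\<lambda>k. S y + inverse (real (Suc k)) *\<^sub>R sig y) \<longlonglongrightarrow> S y + 0 *\<^sub>R sig y"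
      by (intro tendsto_add tendsto_const tendsto_scaleR LIMSEQ_inverse_real_of_nat)
    hence "(\<lambda>k. S y + inverse (real (Suc k)) *\<^sub>R sig y) \<longlonglongrightarrow> S y" by simp
    thus ?thesis unfolding zs_def by (intro tendsto_Pair tendsto_const)
  qed
  have "(?a, - ?u) \<in> limiting_normal (Gs \<mu>) (S y, (1/\<gamma>) *\<^sub>R (y - S y))"
    unfolding limiting_normal_def using m1 m2 m3 by blast
  hence "gdir y d" using dir_iff by blast
  thus ?thesis by blast
qed

end

context lsetup
begin

abbreviation "arm \<sigma> y d \<tau> \<equiv> gdna_armijo (lasso_Abar A) (lasso_bbar A b) (lasso_g \<mu>) \<gamma> \<sigma> y d \<tau>"

lemma armijo_small: assumes dd: "gdir y d" and s: "0 < \<sigma>" "\<sigma> < 1/2" and t: "0 < \<tau>" "\<tau> * KK \<le> 2*(1-\<sigma>)*lam"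
  shows "arm \<sigma> y d \<tau>"
proof -
  let ?n = "(norm d)\<^sup>2" and ?fd = "F y \<bullet> d"
  have fd: "?fd \<le> - (lam * ?n)" using dir_desc(1)[OF dd] lam(2)[of d] by linarith
  have q: "(Q *v (\<tau> *\<^sub>R d)) \<bullet> (\<tau> *\<^sub>R d) \<le> \<tau> * \<tau> * (KK * ?n)"
  proof -
    have "(Q *v (\<tau> *\<^sub>R d)) \<bullet> (\<tau> *\<^sub>R d) = \<tau> * \<tau> * ((Q *v d) \<bullet> d)" by (simp add: matrix_vector_mult_scaleR)
    also have "\<dots> \<le> \<tau> * \<tau> * (KK * ?n)" by (rule mult_left_mono[OF Q_quad_le]) simp
    finally show ?thesis .
  qed
  have up: "psi (y + \<tau> *\<^sub>R d) \<le> psi y + \<tau> * ?fd + 1/2 * (\<tau> * \<tau> * (KK * ?n))"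
    using psi_upper[of y "\<tau> *\<^sub>R d"] q by simp
  have "1/2 * (\<tau> * \<tau> * (KK * ?n)) = 1/2 * \<tau> * ((\<tau> * KK) * ?n)" by (simp add: algebra_simps)
  also have "\<dots> \<le> 1/2 * \<tau> * ((2*(1-\<sigma>)*lam) * ?n)"
    using t by (intro mult_left_mono mult_right_mono) auto
  also have "\<dots> = \<tau> * (1 - \<sigma>) * (lam * ?n)" by (simp add: algebra_simps)
  also have "\<dots> \<le> \<tau> * (1 - \<sigma>) * (- ?fd)" using t s fd by (intro mult_left_mono) auto
  finally have "1/2 * (\<tau> * \<tau> * (KK * ?n)) \<le> \<tau> * (1 - \<sigma>) * (- ?fd)" .
  hence "psi (y + \<tau> *\<^sub>R d) \<le> psi y + \<sigma> * \<tau> * ?fd" using up by (simp add: algebra_simps)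
  thus ?thesis by (simp add: gdna_armijo_def)
qed

lemma armijo_exists: assumes dd: "gdir y d" and s: "0 < \<sigma>" "\<sigma> < 1/2" and bt: "0 < \<beta>" "\<beta> < 1"
  shows "\<exists>j. arm \<sigma> y d (\<beta> ^ j)"
proof -
  have pos: "2*(1-\<sigma>)*lam / KK > 0" using s lam(1) KK(1) by simp
  obtain j where j: "\<beta> ^ j < 2*(1-\<sigma>)*lam / KK" using real_arch_pow_inv[OF pos bt(2)] by blast
  have "\<beta> ^ j * KK \<le> 2*(1-\<sigma>)*lam" using j KK(1) by (simp add: pos_less_divide_eq less_imp_le)
  hence "arm \<sigma> y d (\<beta> ^ j)" using armijo_small[OF dd s] bt by simp
  thus ?thesis by blast
qed

lemma tau_lower: assumes dd: "gdir y d" and s: "0 < \<sigma>" "\<sigma> < 1/2" and bt: "0 < \<beta>" "\<beta> < 1"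
  shows "\<beta> ^ (LEAST j. arm \<sigma> y d (\<beta> ^ j)) \<ge> min 1 (\<beta> * (2*(1-\<sigma>)*lam / KK))"
proof (cases "(LEAST j. arm \<sigma> y d (\<beta> ^ j))")
  case 0 thus ?thesis by simp
next
  case (Suc j)
  hence "j < (LEAST j. arm \<sigma> y d (\<beta> ^ j))" by simp
  hence na: "\<not> arm \<sigma> y d (\<beta> ^ j)" by (rule not_less_Least)
  have "\<beta> ^ j * KK > 2*(1-\<sigma>)*lam"
  proof (rule ccontr)
    assume "\<not> ?thesis"
    hence "arm \<sigma> y d (\<beta> ^ j)" using armijo_small[OF dd s] bt by simp
    thus False using na by blast
  qed
  hence "\<beta> ^ j > 2*(1-\<sigma>)*lam / KK" using KK(1) by (simp add: pos_divide_less_eq)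
  hence "\<beta> * \<beta> ^ j \<ge> \<beta> * (2*(1-\<sigma>)*lam / KK)" using bt by (intro mult_left_mono) auto
  thus ?thesis using Suc by simp
qed

lemma well_defined: assumes s: "0 < \<sigma>" "\<sigma> < 1/2" and bt: "0 < \<beta>" "\<beta> < 1"
  shows "gdna_well_defined (lasso_Abar A) (lasso_bbar A b) (lasso_g \<mu>) \<gamma> \<sigma> \<beta>"
  unfolding gdna_well_defined_def using dir_exists armijo_exists[OF _ s bt] by blast


abbreviation "grun \<sigma> \<beta> ys ds \<equiv> gdna_run (lasso_Abar A) (lasso_bbar A b) (lasso_g \<mu>) \<gamma> \<sigma> \<beta> ys ds"

definition tmin :: "real \<Rightarrow> real \<Rightarrow> real" where "tmin \<sigma> \<beta> = min 1 (\<beta> * (2*(1-\<sigma>)*lam / KK))"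
definition c0 :: "real \<Rightarrow> real \<Rightarrow> real" where "c0 \<sigma> \<beta> = \<sigma> * tmin \<sigma> \<beta> * lam / (1 + KK)\<^sup>2"

lemma tmin_pos: "0 < \<sigma> \<Longrightarrow> \<sigma> < 1/2 \<Longrightarrow> 0 < \<beta> \<Longrightarrow> tmin \<sigma> \<beta> > 0"
  using lam(1) KK(1) by (simp add: tmin_def)

lemma c0_pos: "0 < \<sigma> \<Longrightarrow> \<sigma> < 1/2 \<Longrightarrow> 0 < \<beta> \<Longrightarrow> c0 \<sigma> \<beta> > 0"
  using lam(1) KK(1) tmin_pos by (simp add: c0_def)

lemma run_step: assumes run: "grun \<sigma> \<beta> ys ds" and s: "0 < \<sigma>" "\<sigma> < 1/2" and bt: "0 < \<beta>" "\<beta> < 1"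
  shows "psi (ys (Suc k)) \<le> psi (ys k) - c0 \<sigma> \<beta> * (norm (F (ys k)))\<^sup>2"
proof (cases "F (ys k) = 0")
  case True
  hence "ys (Suc k) = ys k" using run by (simp add: gdna_run_def)
  thus ?thesis using True by simp
next
  case False
  let ?y = "ys k" and ?d = "ds k"
  let ?j = "LEAST j. arm \<sigma> ?y ?d (\<beta> ^ j)"
  have dd: "gdir ?y ?d" and yS: "ys (Suc k) = ?y + (\<beta> ^ ?j) *\<^sub>R ?d" using run False by (simp_all add: gdna_run_def)
  have ar: "arm \<sigma> ?y ?d (\<beta> ^ ?j)" by (rule LeastI_ex[OF armijo_exists[OF dd s bt]])
  have tl: "\<beta> ^ ?j \<ge> tmin \<sigma> \<beta>" using tau_lower[OF dd s bt] by (simp add: tmin_def)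
  have tp: "tmin \<sigma> \<beta> > 0" using tmin_pos s bt by simp
  have fd: "F ?y \<bullet> ?d \<le> - (lam * (norm ?d)\<^sup>2)" using dir_desc(1)[OF dd] lam(2)[of ?d] by linarith
  have nF: "(norm (F ?y))\<^sup>2 \<le> (1 + KK)\<^sup>2 * (norm ?d)\<^sup>2"
  proof -
    have "norm (F ?y) \<le> (1 + KK) * norm ?d" by (rule dir_desc(2)[OF dd])
    hence "(norm (F ?y))\<^sup>2 \<le> ((1 + KK) * norm ?d)\<^sup>2" by (rule power_mono) simp
    thus ?thesis by (simp add: power_mult_distrib)
  qed
  have K1: "(1 + KK)\<^sup>2 > 0" using KK(1) by simp
  have "psi (ys (Suc k)) \<le> psi ?y + \<sigma> * \<beta> ^ ?j * (F ?y \<bullet> ?d)" using ar yS by (simp add: gdna_armijo_def)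
  also have "\<sigma> * \<beta> ^ ?j * (F ?y \<bullet> ?d) \<le> \<sigma> * \<beta> ^ ?j * (- (lam * (norm ?d)\<^sup>2))"
    using s bt fd by (intro mult_left_mono) auto
  also have "\<dots> = - (\<sigma> * lam * (norm ?d)\<^sup>2 * \<beta> ^ ?j)" by (simp add: algebra_simps)
  also have "\<dots> \<le> - (\<sigma> * lam * (norm ?d)\<^sup>2 * tmin \<sigma> \<beta>)"
    using s lam(1) tl by (simp add: mult_left_mono)
  also have "\<dots> \<le> - (\<sigma> * lam * tmin \<sigma> \<beta> * ((norm (F ?y))\<^sup>2 / (1 + KK)\<^sup>2))"
  proof -
    have "(norm (F ?y))\<^sup>2 / (1 + KK)\<^sup>2 \<le> (norm ?d)\<^sup>2" using nF K1 by (simp add: divide_le_eq mult.commute)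
    hence "\<sigma> * lam * tmin \<sigma> \<beta> * ((norm (F ?y))\<^sup>2 / (1 + KK)\<^sup>2) \<le> \<sigma> * lam * tmin \<sigma> \<beta> * (norm ?d)\<^sup>2"
      using s lam(1) tp by (intro mult_left_mono) auto
    thus ?thesis by (simp add: algebra_simps)
  qed
  also have "\<dots> = - (c0 \<sigma> \<beta> * (norm (F ?y))\<^sup>2)" by (simp add: c0_def algebra_simps)
  finally show ?thesis by simp
qed

lemma run_sum: assumes run: "grun \<sigma> \<beta> ys ds" and s: "0 < \<sigma>" "\<sigma> < 1/2" and bt: "0 < \<beta>" "\<beta> < 1"
  shows "c0 \<sigma> \<beta> * (\<Sum>k<N. (norm (F (ys k)))\<^sup>2) \<le> psi (ys 0) - psi (ys N)"
proof (induction N)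
  case 0 thus ?case by simp
next
  case (Suc N)
  thus ?case using run_step[OF run s bt, of N] by (simp add: distrib_left)
qed

lemma run_F0: assumes run: "grun \<sigma> \<beta> ys ds" and s: "0 < \<sigma>" "\<sigma> < 1/2" and bt: "0 < \<beta>" "\<beta> < 1"
  shows "(\<lambda>k. F (ys k)) \<longlonglongrightarrow> 0"
proof -
  have cp: "c0 \<sigma> \<beta> > 0" using c0_pos s bt by simp
  have "summable (\<lambda>k. (norm (F (ys k)))\<^sup>2)"
  proof (rule summableI_nonneg_bounded)
    fix N
    have "c0 \<sigma> \<beta> * (\<Sum>k<N. (norm (F (ys k)))\<^sup>2) \<le> psi (ys 0) + (norm cc)\<^sup>2 / (2 * lam)"
      using run_sum[OF run s bt, of N] psi_lower[of "ys N"] by linarith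
    thus "(\<Sum>k<N. (norm (F (ys k)))\<^sup>2) \<le> (psi (ys 0) + (norm cc)\<^sup>2 / (2 * lam)) / c0 \<sigma> \<beta>"
      using cp by (simp add: le_divide_eq mult.commute)
  qed simp
  hence "(\<lambda>k. (norm (F (ys k)))\<^sup>2) \<longlonglongrightarrow> 0" by (rule summable_LIMSEQ_zero)
  hence "(\<lambda>k. sqrt ((norm (F (ys k)))\<^sup>2)) \<longlonglongrightarrow> sqrt 0" by (rule tendsto_real_sqrt)
  hence "(\<lambda>k. norm (F (ys k))) \<longlonglongrightarrow> 0" by simp
  thus ?thesis by (simp add: tendsto_norm_zero_iff)
qed

lemma F_lip: "norm (F x - F z) \<le> (KK + 1) * norm (x - z)"
proof -
  have "F x - F z = Q *v (x - z) - (S x - S z)" by (simp add: F_eq matrix_vector_mult_diff_distrib algebra_simps)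
  hence "norm (F x - F z) \<le> norm (Q *v (x - z)) + norm (S x - S z)" by (metis norm_triangle_ineq4)
  also have "\<dots> \<le> norm (x - z) * KK + norm (x - z)" using KK(2)[of "x - z"] S_lip[of x z] by linarith
  finally show ?thesis by (simp add: algebra_simps)
qed

lemma run_conv: assumes run: "grun \<sigma> \<beta> ys ds" and s: "0 < \<sigma>" "\<sigma> < 1/2" and bt: "0 < \<beta>" "\<beta> < 1"
  shows "\<exists>yb. ys \<longlonglongrightarrow> yb \<and> F yb = 0"
proof -
  have F0: "(\<lambda>k. F (ys k)) \<longlonglongrightarrow> 0" by (rule run_F0[OF run s bt])
  have "Cauchy ys"
  proof (rule CauchyI)
    fix e :: real assume e: "e > 0"
    have "lam * e / 2 > 0" using e lam(1) by simp
    then obtain M where M: "\<forall>k\<ge>M. norm (F (ys k)) < lam * e / 2"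
      using F0 unfolding LIMSEQ_iff by (metis diff_zero)
    show "\<exists>M. \<forall>m\<ge>M. \<forall>n\<ge>M. norm (ys m - ys n) < e"
    proof (intro exI[of _ M] allI impI)
      fix m n assume mn: "m \<ge> M" "n \<ge> M"
      have "lam * norm (ys m - ys n) \<le> norm (F (ys m) - F (ys n))" by (rule F_dist)
      also have "\<dots> \<le> norm (F (ys m)) + norm (F (ys n))" by (rule norm_triangle_ineq4)
      also have "\<dots> < lam * e" using M[rule_format, OF mn(1)] M[rule_format, OF mn(2)] by linarith
      finally show "norm (ys m - ys n) < e" using lam(1) by simp
    qed
  qed
  then obtain yb where yb: "ys \<longlonglongrightarrow> yb" using Cauchy_convergent_iff convergent_def by blast
  have "(\<lambda>k. F (ys k)) \<longlonglongrightarrow> F yb"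
  proof -
    have "(\<lambda>k. (KK + 1) * norm (ys k - yb)) \<longlonglongrightarrow> (KK + 1) * 0"
      using yb by (intro tendsto_mult tendsto_const) (simp add: tendsto_norm_zero_iff LIM_zero)
    hence g0: "(\<lambda>k. (KK + 1) * norm (ys k - yb)) \<longlonglongrightarrow> 0" by simp
    have "eventually (\<lambda>k. norm (F (ys k) - F yb) \<le> (KK + 1) * norm (ys k - yb)) sequentially"
      by (rule always_eventually) (simp add: F_lip)
    hence "(\<lambda>k. F (ys k) - F yb) \<longlonglongrightarrow> 0" using g0 by (rule Lim_null_comparison)
    thus ?thesis by (simp add: LIM_zero_iff)
  qed
  hence "F yb = 0" using F0 LIMSEQ_unique by blast
  thus ?thesis using yb by blast
qed

end

context lsetup
begin

lemma newton_exact: assumes Fyb: "F yb = 0" and nr: "\<And>i. near1 \<theta> (y$i) (yb$i)" and dd: "gdir y d"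
  shows "y + d = yb"
proof -
  define e where "e = y - yb"
  define s where "s = y + d - yb"
  define u where "u = Q *v d + F y"
  define \<delta> where "\<delta> = S y - S yb"
  have Fy: "F y = Q *v e - \<delta>"
  proof -
    have "F y = F y - F yb" using Fyb by simp
    also have "\<dots> = Q *v e - \<delta>" by (simp add: F_eq e_def \<delta>_def matrix_vector_mult_diff_distrib algebra_simps)
    finally show ?thesis .
  qed
  have sde: "s = d + e" by (simp add: s_def e_def algebra_simps)
  have uQ: "u = Q *v s - \<delta>" by (simp add: u_def Fy sde matrix_vector_right_distrib algebra_simps)
  have du: "d - u = - (P *v s) - e + \<delta>" by (simp add: uQ Qw sde algebra_simps)
  have Qc: "(Q *v s)$i = (P *v s)$i + s$i" for i by (simp add: Qw)
  have prod: "(P *v s)$i * (Q *v s)$i \<le> 0" for i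
  proof -
    have dn: "(d$i - u$i) * u$i \<ge> 0 \<and> (\<bar>y$i\<bar> > \<theta> \<longrightarrow> d$i = u$i) \<and> (\<bar>y$i\<bar> < \<theta> \<longrightarrow> u$i = 0)"
      using dir_nec[OF dd, of i] by (simp add: u_def)
    have du_i: "d$i - u$i = - (P *v s)$i - e$i + \<delta>$i" using arg_cong[OF du, of "\<lambda>v. v$i"] by simp
    have u_i: "u$i = (Q *v s)$i - \<delta>$i" using arg_cong[OF uQ, of "\<lambda>v. v$i"] by simp
    have ed: "\<delta>$i = soft \<theta> (y$i) - soft \<theta> (yb$i)" "e$i = y$i - yb$i" by (simp_all add: \<delta>_def e_def)
    from near1_soft[OF th nr[of i]]
    consider "soft \<theta> (y$i) - soft \<theta> (yb$i) = y$i - yb$i" "\<bar>y$i\<bar> > \<theta>"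
      | "soft \<theta> (y$i) - soft \<theta> (yb$i) = 0" "\<bar>y$i\<bar> < \<theta>" | "y$i = yb$i" by blast
    thus ?thesis
    proof cases
      case 1
      hence "(P *v s)$i = 0" using dn du_i ed by simp
      thus ?thesis by simp
    next
      case 2
      hence "(Q *v s)$i = 0" using dn u_i ed by simp
      thus ?thesis by simp
    next
      case 3
      hence "\<delta>$i = 0" "e$i = 0" using ed by simp_all
      hence "d$i - u$i = - (P *v s)$i" "u$i = (Q *v s)$i" using du_i u_i by simp_all
      thus ?thesis using dn by (metis minus_mult_left neg_0_le_iff_le)
    qed
  qed
  have "(P *v s) \<bullet> s \<le> 0"
    unfolding inner_sum_cart
  proof (rule sum_nonpos)
    fix i
    have "(P *v s)$i * s$i = (P *v s)$i * (Q *v s)$i - (P *v s)$i * (P *v s)$i"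
      by (simp add: Qc algebra_simps)
    thus "(P *v s)$i * s$i \<le> 0" using prod[of i] by (smt (verit) zero_le_square)
  qed
  hence "s = 0" using Ppos[of s] by (cases "s = 0") auto
  thus ?thesis by (simp add: s_def algebra_simps)
qed

lemma newton_arm: assumes Fyb: "F yb = 0" and nr: "\<And>i. near1 \<theta> (y$i) (yb$i)" and dd: "gdir y d"
  and s: "0 < \<sigma>" "\<sigma> < 1/2"
  shows "arm \<sigma> y d 1"
proof -
  have yd: "y + d = yb" by (rule newton_exact[OF Fyb nr dd])
  have tr: "psi y - psi yb = 1/2 * (F y \<bullet> (y - yb))" using psi_trap[OF nr] Fyb by simp
  have nn: "F y \<bullet> (y - yb) \<ge> 0"
    using F_strong[of y yb] Fyb lam(1) by (smt (verit) diff_zero zero_le_mult_iff zero_le_power2)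
  have dd': "d = - (y - yb)" using yd by (simp add: algebra_simps)
  have "psi yb \<le> psi y + \<sigma> * 1 * (F y \<bullet> d)"
  proof -
    have "\<sigma> * (F y \<bullet> (y - yb)) \<le> 1/2 * (F y \<bullet> (y - yb))" using s nn by (intro mult_right_mono) auto
    moreover have "F y \<bullet> d = - (F y \<bullet> (y - yb))" using dd' by (simp only: inner_minus_right)
    ultimately show ?thesis using tr by simp
  qed
  thus ?thesis using yd by (simp add: gdna_armijo_def)
qed

lemma near_ball: "\<exists>r>0. \<forall>y. norm (y - yb) < r \<longrightarrow> (\<forall>i. near1 \<theta> (y$i) (yb$i))"
proof -
  define ri where "ri i = (if \<bar>yb$i\<bar> = \<theta> then \<theta> else \<bar>\<bar>yb$i\<bar> - \<theta>\<bar>)" for i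
  define r where "r = Min (range ri)"
  have rip: "ri i > 0" for i using th by (auto simp: ri_def)
  have r: "r > 0" unfolding r_def by (subst Min_gr_iff) (use rip in auto)
  have rle: "r \<le> ri i" for i unfolding r_def by (rule Min_le) auto
  show ?thesis
  proof (intro exI[of _ r] conjI r allI impI)
    fix y i assume "norm (y - yb) < r"
    hence "\<bar>y$i - yb$i\<bar> < ri i" using component_le_norm_cart[of "y - yb" i] rle[of i] by simp
    thus "near1 \<theta> (y$i) (yb$i)" using near1_close[OF th] by (simp add: ri_def)
  qed
qed

lemma run_main: assumes run: "grun \<sigma> \<beta> ys ds" and s: "0 < \<sigma>" "\<sigma> < 1/2" and bt: "0 < \<beta>" "\<beta> < 1"
  shows "\<exists>yb. ys \<longlonglongrightarrow> yb \<and> q_superlinear ys yb \<and> F yb = 0"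
proof -
  obtain yb where yb: "ys \<longlonglongrightarrow> yb" and Fyb: "F yb = 0" using run_conv[OF run s bt] by blast
  obtain r where r: "r > 0" and rn: "\<And>y. norm (y - yb) < r \<Longrightarrow> (\<forall>i. near1 \<theta> (y$i) (yb$i))"
    using near_ball[of yb] by blast
  have ev: "eventually (\<lambda>k. norm (ys k - yb) < r) sequentially"
    using yb r unfolding tendsto_iff dist_norm by blast
  have ev2: "eventually (\<lambda>k. 0 = norm (ys (Suc k) - yb) / norm (ys k - yb)) sequentially"
    using ev
  proof eventually_elim
    case (elim k)
    have "ys (Suc k) = yb"
    proof (cases "F (ys k) = 0")
      case True
      hence "ys (Suc k) = ys k" using run by (simp add: gdna_run_def)
      moreover have "ys k = yb"
      proof -
        have "lam * norm (ys k - yb) \<le> norm (F (ys k) - F yb)" by (rule F_dist)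
        hence "lam * norm (ys k - yb) \<le> 0" using True Fyb by simp
        thus ?thesis using lam(1) by (simp add: mult_le_0_iff)
      qed
      ultimately show ?thesis by simp
    next
      case False
      have dd: "gdir (ys k) (ds k)" and yS: "ys (Suc k) = ys k + (\<beta> ^ (LEAST j. arm \<sigma> (ys k) (ds k) (\<beta> ^ j))) *\<^sub>R ds k"
        using run False by (simp_all add: gdna_run_def)
      have nr: "\<And>i. near1 \<theta> (ys k $ i) (yb $ i)" using rn[OF elim] by blast
      have "arm \<sigma> (ys k) (ds k) (\<beta> ^ 0)" using newton_arm[OF Fyb nr dd s] by simp
      hence "(LEAST j. arm \<sigma> (ys k) (ds k) (\<beta> ^ j)) = 0" by (metis (mono_tags, lifting) Least_le le_zero_eq)
      hence "ys (Suc k) = ys k + ds k" using yS by simp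
      thus ?thesis using newton_exact[OF Fyb nr dd] by simp
    qed
    thus ?case by simp
  qed
  have "(\<lambda>k. norm (ys (Suc k) - yb) / norm (ys k - yb)) \<longlonglongrightarrow> 0"
    by (rule Lim_transform_eventually[OF tendsto_const ev2])
  thus ?thesis using yb Fyb unfolding q_superlinear_def by blast
qed

end

lemma subgrad_ineq: assumes h: "inG \<mu> x v" shows "lasso_g \<mu> u - lasso_g \<mu> x - v \<bullet> (u - x) \<ge> 0"
proof -
  have "lasso_g \<mu> u - lasso_g \<mu> x - v \<bullet> (u - x) = (\<Sum>i\<in>UNIV. \<mu>*\<bar>u$i\<bar> - \<mu>*\<bar>x$i\<bar> - v$i * (u$i - x$i))"
    by (simp add: g_sum inner_sum_cart sum_subtractf)
  also have "\<dots> \<ge> 0"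
  proof (rule sum_nonneg)
    fix i
    have vi: "\<bar>v$i\<bar> \<le> \<mu>" "x$i > 0 \<Longrightarrow> v$i = \<mu>" "x$i < 0 \<Longrightarrow> v$i = -\<mu>" using h by (auto simp: inG_def)
    have "v$i * u$i \<le> \<mu> * \<bar>u$i\<bar>"
    proof -
      have "v$i * u$i \<le> \<bar>v$i\<bar> * \<bar>u$i\<bar>" by (metis abs_ge_self abs_mult)
      also have "\<dots> \<le> \<mu> * \<bar>u$i\<bar>" using vi(1) by (simp add: mult_right_mono)
      finally show ?thesis .
    qed
    moreover have "v$i * x$i = \<mu> * \<bar>x$i\<bar>"
      using vi by (cases "x$i > 0"; cases "x$i < 0") auto
    ultimately show "0 \<le> \<mu>*\<bar>u$i\<bar> - \<mu>*\<bar>x$i\<bar> - v$i * (u$i - x$i)" by (simp add: algebra_simps)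
  qed
  finally show ?thesis .
qed

lemma norm_sq_add: "(norm (p + q))\<^sup>2 = (norm p)\<^sup>2 + 2 * (p \<bullet> q) + (norm q)\<^sup>2" for p q :: "'a::real_inner"
  by (simp add: power2_norm_eq_inner inner_add_left inner_add_right inner_commute)

context lsetup
begin

lemma inG_S: "inG \<mu> (S y) ((1/\<gamma>) *\<^sub>R (y - S y))"
  unfolding inG_def
proof (intro allI conjI impI)
  fix i
  have xi: "((1/\<gamma>) *\<^sub>R (y - S y)) $ i = (y$i - soft \<theta> (y$i))/\<gamma>" by simp
  have gm: "\<theta>/\<gamma> = \<mu>" using g by simp
  show "\<bar>((1/\<gamma>) *\<^sub>R (y - S y)) $ i\<bar> \<le> \<mu>" unfolding xi by (rule xi_le)
  show "((1/\<gamma>) *\<^sub>R (y - S y)) $ i = \<mu>" if "S y $ i > 0"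
    using soft_props(4)[OF th, of "y$i"] that gm unfolding xi by simp
  show "((1/\<gamma>) *\<^sub>R (y - S y)) $ i = -\<mu>" if "S y $ i < 0"
    using soft_props(5)[OF th, of "y$i"] that gm unfolding xi by simp
qed

lemma opt_cond: assumes Fyb: "F yb = 0"
  shows "lasso_Abar A *v (Q *v yb + cc) + lasso_bbar A b + (1/\<gamma>) *\<^sub>R (yb - (Q *v yb + cc)) = 0"
proof -
  let ?M = "mat 1 - \<gamma> *\<^sub>R lasso_Abar A" and ?xb = "Q *v yb + cc" and ?bb = "lasso_bbar A b"
  have Mc: "?M *v cc = \<gamma> *\<^sub>R ?bb" by (simp add: gdna_c_def matrix_vector_mult_scaleR MQ[OF pd])
  have "?M *v ?xb = yb + \<gamma> *\<^sub>R ?bb" by (simp add: matrix_vector_right_distrib MQ[OF pd] Mc)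
  define X where "X = lasso_Abar A *v ?xb"
  have e: "?xb - \<gamma> *\<^sub>R X = yb + \<gamma> *\<^sub>R ?bb" using \<open>?M *v ?xb = yb + \<gamma> *\<^sub>R ?bb\<close> by (simp only: M_mv X_def)
  have "yb - ?xb = - (\<gamma> *\<^sub>R (X + ?bb))"
  proof -
    have "yb - ?xb = (?xb - \<gamma> *\<^sub>R X - \<gamma> *\<^sub>R ?bb) - ?xb" using e by simp
    also have "\<dots> = - (\<gamma> *\<^sub>R (X + ?bb))" by (simp add: scaleR_add_right)
    finally show ?thesis .
  qed
  hence "(1/\<gamma>) *\<^sub>R (yb - ?xb) = - (X + ?bb)" using g by simp
  thus ?thesis unfolding X_def by simp
qed

lemma lasso_growth: assumes Fyb: "F yb = 0"
  shows "lasso A b \<mu> z \<ge> lasso A b \<mu> (Q *v yb + cc) + 1/2 * (norm (A *v (z - (Q *v yb + cc))))\<^sup>2"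
proof -
  let ?xb = "Q *v yb + cc"
  define \<xi> where "\<xi> = (1/\<gamma>) *\<^sub>R (yb - ?xb)"
  define w where "w = z - ?xb"
  have xbS: "?xb = S yb" using Fyb by (simp add: F_eq algebra_simps)
  have G: "inG \<mu> ?xb \<xi>" unfolding \<xi>_def xbS by (rule inG_S)
  have sg: "lasso_g \<mu> z - lasso_g \<mu> ?xb - \<xi> \<bullet> w \<ge> 0" unfolding w_def by (rule subgrad_ineq[OF G])
  have oc: "lasso_Abar A *v ?xb + lasso_bbar A b = - \<xi>" using opt_cond[OF Fyb] unfolding \<xi>_def
    by (simp add: add_eq_0_iff)
  have tr: "(A *v ?xb - b) \<bullet> (A *v w) = - (\<xi> \<bullet> w)"
  proof -
    have "(A *v ?xb - b) \<bullet> (A *v w) = (transpose A *v (A *v ?xb - b)) \<bullet> w" by (simp only: tr_inner)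
    also have "transpose A *v (A *v ?xb - b) = lasso_Abar A *v ?xb + lasso_bbar A b"
      by (simp add: lasso_Abar_def lasso_bbar_def matrix_vector_mul_assoc matrix_vector_mult_diff_distrib)
    finally show ?thesis using oc by simp
  qed
  have Az: "A *v z - b = (A *v ?xb - b) + A *v w" by (simp add: w_def matrix_vector_mult_diff_distrib)
  have "lasso A b \<mu> z = 1/2 * (norm (A *v ?xb - b))\<^sup>2 + (A *v ?xb - b) \<bullet> (A *v w) + 1/2 * (norm (A *v w))\<^sup>2 + lasso_g \<mu> z"
    unfolding lasso_def Az norm_sq_add by (simp add: lasso_g_def algebra_simps)
  also have "\<dots> \<ge> lasso A b \<mu> ?xb + 1/2 * (norm (A *v w))\<^sup>2"
    using sg tr by (simp add: lasso_def lasso_g_def)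
  finally show ?thesis by (simp add: w_def)
qed

lemma A_pos: "w \<noteq> 0 \<Longrightarrow> (norm (A *v w))\<^sup>2 > 0"
proof -
  assume "w \<noteq> 0"
  hence "w \<bullet> ((transpose A ** A) *v w) > 0" using pA unfolding pos_def_def by blast
  hence "(lasso_Abar A *v w) \<bullet> w > 0" by (simp add: lasso_Abar_def inner_commute)
  thus ?thesis by (simp add: Ab_inner power2_norm_eq_inner)
qed

lemma lasso_unique: assumes Fyb: "F yb = 0"
  shows "{x. \<forall>z. lasso A b \<mu> x \<le> lasso A b \<mu> z} = {Q *v yb + cc}"
proof (intro set_eqI iffI)
  fix x assume "x \<in> {x. \<forall>z. lasso A b \<mu> x \<le> lasso A b \<mu> z}"
  hence "lasso A b \<mu> x \<le> lasso A b \<mu> (Q *v yb + cc)" by blast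
  moreover have "lasso A b \<mu> x \<ge> lasso A b \<mu> (Q *v yb + cc) + 1/2 * (norm (A *v (x - (Q *v yb + cc))))\<^sup>2"
    by (rule lasso_growth[OF Fyb])
  ultimately have "(norm (A *v (x - (Q *v yb + cc))))\<^sup>2 \<le> 0" by linarith
  hence "x - (Q *v yb + cc) = 0" using A_pos[of "x - (Q *v yb + cc)"] by (cases "x - (Q *v yb + cc) = 0") auto
  thus "x \<in> {Q *v yb + cc}" by simp
next
  fix x assume "x \<in> {Q *v yb + cc}"
  thus "x \<in> {x. \<forall>z. lasso A b \<mu> x \<le> lasso A b \<mu> z}"
  proof (simp, intro allI)
    fix z
    have "lasso A b \<mu> z \<ge> lasso A b \<mu> (Q *v yb + cc) + 1/2 * (norm (A *v (z - (Q *v yb + cc))))\<^sup>2"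
      by (rule lasso_growth[OF Fyb])
    moreover have "0 \<le> 1/2 * (norm (A *v (z - (Q *v yb + cc))))\<^sup>2" by simp
    ultimately show "lasso A b \<mu> (Q *v yb + cc) \<le> lasso A b \<mu> z" by linarith
  qed
qed

end

lemma conv_sq: "(norm ((1-t) *\<^sub>R p + t *\<^sub>R q))\<^sup>2 = (1-t)*(norm p)\<^sup>2 + t*(norm q)\<^sup>2 - t*(1-t)*(norm (q - p))\<^sup>2"
  for p q :: "'a::real_inner"
proof -
  have "(norm ((1-t) *\<^sub>R p + t *\<^sub>R q))\<^sup>2 = (1-t)*(1-t)*(p \<bullet> p) + 2*t*(1-t)*(p \<bullet> q) + t*t*(q \<bullet> q)"
    by (simp add: power2_norm_eq_inner inner_add_left inner_add_right inner_commute[of q p] algebra_simps)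
  moreover have "(norm (q - p))\<^sup>2 = p \<bullet> p - 2*(p \<bullet> q) + q \<bullet> q"
    by (simp add: power2_norm_eq_inner inner_diff_left inner_diff_right inner_commute[of q p] algebra_simps)
  ultimately show ?thesis by (simp add: power2_norm_eq_inner algebra_simps)
qed

lemma l1_conv: assumes "0 \<le> t" "t \<le> 1" "\<mu> \<ge> 0"
  shows "lasso_g \<mu> ((1-t) *\<^sub>R x + t *\<^sub>R z) \<le> (1-t) * lasso_g \<mu> x + t * lasso_g \<mu> z"
proof -
  have "lasso_g \<mu> ((1-t) *\<^sub>R x + t *\<^sub>R z) = (\<Sum>i\<in>UNIV. \<mu> * \<bar>(1-t) * x$i + t * z$i\<bar>)" by (simp add: g_sum)
  also have "\<dots> \<le> (\<Sum>i\<in>UNIV. (1-t) * (\<mu> * \<bar>x$i\<bar>) + t * (\<mu> * \<bar>z$i\<bar>))"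
  proof (rule sum_mono)
    fix i
    have "\<bar>(1-t) * x$i + t * z$i\<bar> \<le> (1-t) * \<bar>x$i\<bar> + t * \<bar>z$i\<bar>"
      using abs_triangle_ineq[of "(1-t) * x$i" "t * z$i"] assms by (simp add: abs_mult)
    hence "\<mu> * \<bar>(1-t) * x$i + t * z$i\<bar> \<le> \<mu> * ((1-t) * \<bar>x$i\<bar> + t * \<bar>z$i\<bar>)" using assms(3) by (rule mult_left_mono)
    thus "\<mu> * \<bar>(1-t) * x$i + t * z$i\<bar> \<le> (1-t) * (\<mu> * \<bar>x$i\<bar>) + t * (\<mu> * \<bar>z$i\<bar>)" by (simp add: algebra_simps)
  qed
  also have "\<dots> = (1-t) * lasso_g \<mu> x + t * lasso_g \<mu> z" by (simp add: g_sum sum.distrib sum_distrib_left)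
  finally show ?thesis .
qed

lemma lasso_conv: assumes t: "0 \<le> t" "t \<le> 1" and mu: "\<mu> \<ge> 0"
  shows "lasso A b \<mu> ((1-t) *\<^sub>R x + t *\<^sub>R z) - v \<bullet> ((1-t) *\<^sub>R x + t *\<^sub>R z) \<le>
    (1-t) * (lasso A b \<mu> x - v \<bullet> x) + t * (lasso A b \<mu> z - v \<bullet> z) - 1/2 * (t * (1-t)) * (norm (A *v (z - x)))\<^sup>2"
proof -
  have e: "A *v ((1-t) *\<^sub>R x + t *\<^sub>R z) - b = (1-t) *\<^sub>R (A *v x - b) + t *\<^sub>R (A *v z - b)"
    by (simp add: matrix_vector_right_distrib matrix_vector_mult_scaleR algebra_simps)
  have qp: "(A *v z - b) - (A *v x - b) = A *v (z - x)" by (simp add: matrix_vector_mult_diff_distrib)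
  have "lasso A b \<mu> ((1-t) *\<^sub>R x + t *\<^sub>R z) = 1/2 * ((1-t)*(norm (A *v x - b))\<^sup>2 + t*(norm (A *v z - b))\<^sup>2
      - t*(1-t)*(norm (A *v (z - x)))\<^sup>2) + lasso_g \<mu> ((1-t) *\<^sub>R x + t *\<^sub>R z)"
    unfolding lasso_def e conv_sq qp by (simp add: lasso_g_def)
  also have "\<dots> \<le> 1/2 * ((1-t)*(norm (A *v x - b))\<^sup>2 + t*(norm (A *v z - b))\<^sup>2
      - t*(1-t)*(norm (A *v (z - x)))\<^sup>2) + ((1-t) * lasso_g \<mu> x + t * lasso_g \<mu> z)"
    using l1_conv[OF t mu] by simp
  finally have L: "lasso A b \<mu> ((1-t) *\<^sub>R x + t *\<^sub>R z) \<le> \<dots>" .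
  have V: "v \<bullet> ((1-t) *\<^sub>R x + t *\<^sub>R z) = (1-t) * (v \<bullet> x) + t * (v \<bullet> z)" by (simp add: inner_add_right)
  have R: "1/2 * ((1-t)*(norm (A *v x - b))\<^sup>2 + t*(norm (A *v z - b))\<^sup>2
      - t*(1-t)*(norm (A *v (z - x)))\<^sup>2) + ((1-t) * lasso_g \<mu> x + t * lasso_g \<mu> z)
      = (1-t) * lasso A b \<mu> x + t * lasso A b \<mu> z - 1/2 * (t * (1-t)) * (norm (A *v (z - x)))\<^sup>2"
    by (simp add: lasso_def lasso_g_def field_simps)
  have D: "(1-t) * (lasso A b \<mu> x - v \<bullet> x) = (1-t) * lasso A b \<mu> x - (1-t) * (v \<bullet> x)"
     "t * (lasso A b \<mu> z - v \<bullet> z) = t * lasso A b \<mu> z - t * (v \<bullet> z)" by (simp_all add: right_diff_distrib)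
  show ?thesis using L unfolding V R D by linarith
qed


context lsetup
begin

definition alpha :: real where "alpha = (SOME a. a > 0 \<and> (\<forall>w. a * (norm w)\<^sup>2 \<le> (lasso_Abar A *v w) \<bullet> w))"

lemma alpha: "alpha > 0" "alpha * (norm w)\<^sup>2 \<le> (norm (A *v w))\<^sup>2"
proof -
  have "\<exists>a>0. \<forall>w. a * (norm w)\<^sup>2 \<le> (lasso_Abar A *v w) \<bullet> w"
  proof (rule quad_lower)
    fix x :: "real^'n" assume "x \<noteq> 0"
    thus "(lasso_Abar A *v x) \<bullet> x > 0" using A_pos[of x] by (simp add: Ab_inner power2_norm_eq_inner)
  qed
  hence "alpha > 0 \<and> (\<forall>w. alpha * (norm w)\<^sup>2 \<le> (lasso_Abar A *v w) \<bullet> w)"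
    unfolding alpha_def by (rule someI_ex[where P="\<lambda>a. a > 0 \<and> (\<forall>w. a * (norm w)\<^sup>2 \<le> (lasso_Abar A *v w) \<bullet> w)"])
  thus "alpha > 0" "alpha * (norm w)\<^sup>2 \<le> (norm (A *v w))\<^sup>2" by (auto simp: Ab_inner power2_norm_eq_inner)
qed

abbreviation "phv v x \<equiv> lasso A b \<mu> x - v \<bullet> x"

lemma qgrowth: assumes C: "convex C" and x0: "x0 \<in> C" and mn: "\<forall>z\<in>C. phv v x0 \<le> phv v z" and z: "z \<in> C"
  shows "phv v z \<ge> phv v x0 + alpha/2 * (norm (z - x0))\<^sup>2"
proof -
  define D where "D = (norm (A *v (z - x0)))\<^sup>2"
  define \<Delta> where "\<Delta> = phv v z - phv v x0"
  have D0: "D \<ge> 0" by (simp add: D_def)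
  have H: "\<Delta> \<ge> 1/2 * (1 - t) * D" if t: "0 < t" "t < 1" for t
  proof -
    have xt: "(1-t) *\<^sub>R x0 + t *\<^sub>R z \<in> C" using C x0 z t unfolding convex_def by simp
    have "phv v x0 \<le> phv v ((1-t) *\<^sub>R x0 + t *\<^sub>R z)" using mn xt by blast
    also have "\<dots> \<le> (1-t) * phv v x0 + t * phv v z - 1/2 * (t * (1-t)) * D"
      unfolding D_def by (rule lasso_conv) (use t mu in auto)
    finally have "t * \<Delta> \<ge> t * (1/2 * (1 - t) * D)" by (simp add: \<Delta>_def algebra_simps)
    thus ?thesis using t by simp
  qed
  have "\<Delta> \<ge> 1/2 * D"
  proof (rule ccontr)
    assume nc: "\<not> ?thesis"
    have h2: "\<Delta> \<ge> 1/4 * D" using H[of "1/2"] by simp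
    have Dp: "D > 0" using nc h2 D0 by linarith
    define t where "t = (1/2 * D - \<Delta>) / D"
    have t0: "t > 0" using nc Dp by (simp add: t_def)
    have t1: "t < 1" using h2 Dp by (simp add: t_def divide_less_eq)
    have "\<Delta> \<ge> 1/2 * (1 - t) * D" by (rule H[OF t0 t1])
    also have "1/2 * (1 - t) * D = 1/2 * D - 1/2 * (1/2 * D - \<Delta>)" using Dp by (simp add: t_def field_simps)
    also have "1/2 * D - 1/2 * (1/2 * D - \<Delta>) = 1/4 * D + 1/2 * \<Delta>" by (simp add: algebra_simps)
    finally show False using nc by linarith
  qed
  moreover have "alpha * (norm (z - x0))\<^sup>2 \<le> D" unfolding D_def by (rule alpha(2))
  ultimately show ?thesis unfolding \<Delta>_def by linarith
qed

lemma lasso_cont: "continuous_on C (\<lambda>x. phv v x)"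
  unfolding lasso_def l1norm_def
  by (intro continuous_intros bounded_linear.continuous_on[OF matrix_vector_mul_bounded_linear] continuous_on_id)

lemma tilt: assumes gm: "\<forall>z. lasso A b \<mu> xb \<le> lasso A b \<mu> z"
  shows "tilt_stable (lasso A b \<mu>) xb"
proof -
  let ?C = "cball xb (1::real)"
  define f where "f v = (SOME x. x \<in> ?C \<and> (\<forall>z\<in>?C. phv v x \<le> phv v z))" for v
  have ex: "\<exists>x. x \<in> ?C \<and> (\<forall>z\<in>?C. phv v x \<le> phv v z)" for v
    using continuous_attains_inf[OF compact_cball _ lasso_cont, of xb 1 v] by auto
  have fv: "f v \<in> ?C \<and> (\<forall>z\<in>?C. phv v (f v) \<le> phv v z)" for v
    unfolding f_def by (rule someI_ex[OF ex])
  have cv: "convex ?C" by (rule convex_cball)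
  have uniq: "x = f v" if "x \<in> ?C" "\<forall>z\<in>?C. phv v x \<le> phv v z" for x v
  proof -
    have "phv v x \<ge> phv v (f v) + alpha/2 * (norm (x - f v))\<^sup>2"
      using qgrowth[OF cv _ _ that(1)] fv[of v] by blast
    moreover have "phv v x \<le> phv v (f v)" using that(2) fv[of v] by blast
    ultimately have "alpha/2 * (norm (x - f v))\<^sup>2 \<le> 0" by linarith
    hence "(norm (x - f v))\<^sup>2 \<le> 0" using alpha(1) by (simp add: mult_le_0_iff)
    thus ?thesis by simp
  qed
  have seteq: "{x \<in> ?C. \<forall>z\<in>?C. lasso A b \<mu> x - v \<bullet> x \<le> lasso A b \<mu> z - v \<bullet> z} = {f v}" for v
    using fv[of v] uniq[of _ v] by blast
  have f0: "f 0 = xb"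
  proof -
    have "xb \<in> ?C" by simp
    moreover have "\<forall>z\<in>?C. phv 0 xb \<le> phv 0 z" using gm by simp
    ultimately show ?thesis using uniq by metis
  qed
  have lip: "(1/alpha)-lipschitz_on (ball 0 1) f"
    unfolding lipschitz_on_def
  proof (intro conjI ballI)
    show "0 \<le> 1/alpha" using alpha(1) by simp
    fix v w :: "real^'n" assume "v \<in> ball 0 1" "w \<in> ball 0 1"
    let ?\<delta> = "norm (f v - f w)"
    have g1: "phv v (f w) \<ge> phv v (f v) + alpha/2 * (norm (f w - f v))\<^sup>2"
      using qgrowth[OF cv] fv[of v] fv[of w] by blast
    have g2: "phv w (f v) \<ge> phv w (f w) + alpha/2 * (norm (f v - f w))\<^sup>2"
      using qgrowth[OF cv] fv[of v] fv[of w] by blast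
    have nn: "norm (f w - f v) = ?\<delta>" by (rule norm_minus_commute)
    have "(v - w) \<bullet> (f v - f w) = (phv v (f w) - phv v (f v)) + (phv w (f v) - phv w (f w))"
      by (simp add: inner_diff_left inner_diff_right algebra_simps)
    hence "alpha * ?\<delta>\<^sup>2 \<le> (v - w) \<bullet> (f v - f w)" using g1 g2 nn by simp
    also have "\<dots> \<le> norm (v - w) * ?\<delta>" by (rule norm_cauchy_schwarz)
    finally have h: "alpha * ?\<delta>\<^sup>2 \<le> norm (v - w) * ?\<delta>" .
    have "alpha * ?\<delta> \<le> norm (v - w)"
    proof (cases "?\<delta> = 0")
      case True thus ?thesis by simp
    next
      case False
      hence "?\<delta> > 0" by simp
      thus ?thesis using h by (simp add: power2_eq_square mult.assoc[symmetric] mult_le_cancel_right)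
    qed
    thus "dist (f v) (f w) \<le> 1/alpha * dist v w" using alpha(1) by (simp add: dist_norm field_simps)
  qed
  show ?thesis unfolding tilt_stable_def
    by (intro exI[of _ "1::real"] conjI zero_less_one exI[of _ "1/alpha"] exI[of _ f] ballI lip f0)
       (rule seteq)
qed

end

theorem theorem6p2:
  fixes A :: "real^'n^'m" and b :: "real^'m" and \<mu> \<gamma> \<sigma> \<beta> :: real
  assumes "\<mu> > 0"
    and "pos_def (transpose A ** A)"
    and "0 < \<sigma>" and "\<sigma> < 1/2" and "0 < \<beta>" and "\<beta> < 1"
    and "\<gamma> > 0" and "pos_def (mat 1 - \<gamma> *\<^sub>R lasso_Abar A)"
  shows "gdna_well_defined (lasso_Abar A) (lasso_bbar A b) (lasso_g \<mu>) \<gamma> \<sigma> \<beta> \<and>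
    (\<forall>y d. gdna_run (lasso_Abar A) (lasso_bbar A b) (lasso_g \<mu>) \<gamma> \<sigma> \<beta> y d \<longrightarrow>
      (\<exists>yb. y \<longlonglongrightarrow> yb \<and> q_superlinear y yb \<and>
        (let xb = gdna_Q (lasso_Abar A) \<gamma> *v yb + gdna_c (lasso_Abar A) (lasso_bbar A b) \<gamma> in
          {x. \<forall>z. lasso A b \<mu> x \<le> lasso A b \<mu> z} = {xb} \<and>
          tilt_stable (lasso A b \<mu>) xb)))"
proof -
  interpret L: lsetup A b \<mu> \<gamma>
    using assms by unfold_locales auto
  have s: "0 < \<sigma>" "\<sigma> < 1/2" and bt: "0 < \<beta>" "\<beta> < 1" using assms by auto
  show ?thesis
  proof (intro conjI allI impI)
    show "gdna_well_defined (lasso_Abar A) (lasso_bbar A b) (lasso_g \<mu>) \<gamma> \<sigma> \<beta>"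
      by (rule L.well_defined[OF s bt])
  next
    fix y d assume run: "gdna_run (lasso_Abar A) (lasso_bbar A b) (lasso_g \<mu>) \<gamma> \<sigma> \<beta> y d"
    obtain yb where yb: "y \<longlonglongrightarrow> yb" "q_superlinear y yb"
      and Fyb: "gdna_grad (lasso_Abar A) (lasso_bbar A b) (lasso_g \<mu>) \<gamma> yb = 0"
      using L.run_main[OF run s bt] by blast
    have U: "{x. \<forall>z. lasso A b \<mu> x \<le> lasso A b \<mu> z} = {gdna_Q (lasso_Abar A) \<gamma> *v yb + gdna_c (lasso_Abar A) (lasso_bbar A b) \<gamma>}"
      by (rule L.lasso_unique[OF Fyb])
    have gm: "\<forall>z. lasso A b \<mu> (gdna_Q (lasso_Abar A) \<gamma> *v yb + gdna_c (lasso_Abar A) (lasso_bbar A b) \<gamma>) \<le> lasso A b \<mu> z"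
      using U by blast
    show "\<exists>yb. y \<longlonglongrightarrow> yb \<and> q_superlinear y yb \<and>
        (let xb = gdna_Q (lasso_Abar A) \<gamma> *v yb + gdna_c (lasso_Abar A) (lasso_bbar A b) \<gamma> in
          {x. \<forall>z. lasso A b \<mu> x \<le> lasso A b \<mu> z} = {xb} \<and>
          tilt_stable (lasso A b \<mu>) xb)"
      using yb U L.tilt[OF gm] unfolding Let_def by blast
  qed
qed

end
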